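(* Let $0<\theta<1$ and $0\le\lambda<\frac{1+\theta}{2}$, and let $N,h,Q\in\mathbb N$ be such that $N^\theta\ll h\ll N^\theta$ and $N^\lambda\ll Q\ll N^\lambda$ as $N\to\infty$. Let $f:\mathbb N\to\mathbb R$ be essentially bounded, with $f=g\ast\mathbf 1$ (i.e. $f(n)=\sum_{d\mid n}g(d)$) where $g:\mathbb N\to\mathbb R$ satisfies $g(q)=0$ for all $q>Q$. Then there exists $\varepsilon_0=\varepsilon_0(\theta,\lambda)>0$, depending only on $\theta$ and $\lambda$, such that $$J_f(N,h)\ll_{\varepsilon_0}Nh^2N^{-\varepsilon_0},\qquad I_f(N,h)\ll_{\varepsilon_0}Nh^2N^{-\varepsilon_0}.$$
   Context: An arithmetic function $F$ is essentially bounded if for every $\varepsilon>0$, $F(n)=O_\varepsilon(n^\varepsilon)$. $\mathrm{sgn}(0)=0$ and $\mathrm{sgn}(r)=|r|/r$ for $r\ne0$. Define $M_f(2h)=2h\sum_{d\le 2N+h}g(d)/d$, the Selberg integral $J_f(N,h)=\int_N^{2N}\Bigl|\sum_{n\in\mathbb N,\,0<|n-x|\le h}f(n)-M_f(2h)\Bigr|^2dx$, and the symmetry integral $I_f(N,h)=\int_N^{2N}\Bigl|\sum_{n\in\mathbb N,\,|n-x|\le h}\mathrm{sgn}(n-x)f(n)\Bigr|^2dx$. *)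

theory Defs
  imports "HOL-Analysis.Analysis"
begin

definition Mf :: "(nat \<Rightarrow> real) \<Rightarrow> nat \<Rightarrow> nat \<Rightarrow> real" where
  "Mf g N h = 2 * real h * (\<Sum>d\<in>{1..2*N+h}. g d / real d)"

definition selberg_J :: "(nat \<Rightarrow> real) \<Rightarrow> (nat \<Rightarrow> real) \<Rightarrow> nat \<Rightarrow> nat \<Rightarrow> real" where
  "selberg_J f g N h = integral {real N..2 * real N}
     (\<lambda>x. \<bar>(\<Sum>n\<in>{n::nat. 1 \<le> n \<and> 0 < \<bar>real n - x\<bar> \<and> \<bar>real n - x\<bar> \<le> real h}. f n)
            - Mf g N h\<bar>^2)"

definition symmetry_I :: "(nat \<Rightarrow> real) \<Rightarrow> nat \<Rightarrow> nat \<Rightarrow> real" where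
  "symmetry_I f N h = integral {real N..2 * real N}
     (\<lambda>x. \<bar>\<Sum>n\<in>{n::nat. 1 \<le> n \<and> \<bar>real n - x\<bar> \<le> real h}. sgn (real n - x) * f n\<bar>^2)"

text \<open>Essential boundedness with explicit constants: |f n| <= C eps * n^eps for all eps > 0.\<close>
definition ess_bounded_by :: "(real \<Rightarrow> real) \<Rightarrow> (nat \<Rightarrow> real) \<Rightarrow> bool" where
  "ess_bounded_by C f \<longleftrightarrow> (\<forall>\<epsilon>>0. \<forall>n\<ge>1. \<bar>f n\<bar> \<le> C \<epsilon> * real n powr \<epsilon>)"

end

theory Submission
  imports Defs "HOL-Computational_Algebra.Primes"
begin

definition ee :: "real \<Rightarrow> complex" where "ee t = cis (2 * pi * t)"
definition dn :: "real \<Rightarrow> real" where "dn x = min (frac x) (1 - frac x)"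

lemma ee_add: "ee (a + b) = ee a * ee b"
  by (simp add: ee_def cis_mult distrib_left)
lemma norm_ee [simp]: "norm (ee t) = 1" by (simp add: ee_def)
lemma ee_int: "ee (of_int n) = 1"
proof -
  have "ee (of_int n) = Complex (cos (2 * pi * of_int n)) (sin (2 * pi * of_int n))"
    by (simp only: ee_def cis.ctr)
  also have "\<dots> = Complex 1 0" by (simp only: cos_int_2pin sin_int_2pin)
  finally show ?thesis by (simp add: complex_eq_iff)
qed
lemma ee_pow: "ee t ^ n = ee (real n * t)"
  unfolding ee_def using Complex.DeMoivre[of "2*pi * t" n] by (simp add: algebra_simps)

lemma dn_le: "dn x \<le> \<bar>x - of_int n\<bar>"
proof -
  have fl: "of_int \<lfloor>x\<rfloor> \<le> x" "x < of_int \<lfloor>x\<rfloor> + 1" by linarith+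
  show ?thesis
  proof (cases "n \<le> \<lfloor>x\<rfloor>")
    case True
    hence "real_of_int n \<le> of_int \<lfloor>x\<rfloor>" by simp
    thus ?thesis using fl unfolding dn_def frac_def by linarith
  next
    case False
    hence "real_of_int n \<ge> of_int \<lfloor>x\<rfloor> + 1" by linarith
    thus ?thesis using fl unfolding dn_def frac_def by linarith
  qed
qed

lemma dn_ge: assumes "\<And>n::int. c \<le> \<bar>x - of_int n\<bar>" shows "c \<le> dn x"
proof -
  have fl: "of_int \<lfloor>x\<rfloor> \<le> x" "x < of_int \<lfloor>x\<rfloor> + 1" by linarith+
  have "c \<le> \<bar>x - of_int \<lfloor>x\<rfloor>\<bar>" "c \<le> \<bar>x - of_int (\<lfloor>x\<rfloor> + 1)\<bar>" using assms by blast+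
  thus ?thesis using fl unfolding dn_def frac_def by auto
qed

lemma dn_nonneg: "0 \<le> dn x" unfolding dn_def using frac_lt_1[of x] frac_ge_0[of x] by simp
lemma dn_le_half: "dn x \<le> 1/2" unfolding dn_def by (auto simp: min_def)
lemma dn_minus: "dn (- x) = dn x"
proof (rule antisym)
  show "dn (-x) \<le> dn x"
  proof (rule dn_ge)
    fix n :: int
    have "dn (-x) \<le> \<bar>-x - of_int (-n)\<bar>" by (rule dn_le)
    thus "dn (-x) \<le> \<bar>x - of_int n\<bar>" by simp
  qed
  show "dn x \<le> dn (-x)"
  proof (rule dn_ge)
    fix n :: int
    have "dn x \<le> \<bar>x - of_int (-n)\<bar>" by (rule dn_le)
    thus "dn x \<le> \<bar>-x - of_int n\<bar>" by simp
  qed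
qed
lemma dn_add_int: "dn (x + of_int m) = dn x"
  unfolding dn_def by (simp add: frac_add_of_int_right)
lemma dn_triangle: "dn (x + y) \<le> dn x + \<bar>y\<bar>"
proof -
  have fl: "of_int \<lfloor>x\<rfloor> \<le> x" "x < of_int \<lfloor>x\<rfloor> + 1" by linarith+
  obtain n where n: "dn x = \<bar>x - of_int n\<bar>"
  proof (cases "frac x \<le> 1 - frac x")
    case True thus ?thesis using that[of "\<lfloor>x\<rfloor>"] fl unfolding dn_def frac_def by auto
  next
    case False thus ?thesis using that[of "\<lfloor>x\<rfloor>+1"] fl unfolding dn_def frac_def by auto
  qed
  have "dn (x+y) \<le> \<bar>x + y - of_int n\<bar>" by (rule dn_le)
  also have "\<dots> \<le> \<bar>x - of_int n\<bar> + \<bar>y\<bar>" by linarith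
  finally show ?thesis using n by simp
qed

lemma jordan: assumes "0 \<le> x" "x \<le> pi/2" shows "2 * x / pi \<le> sin x"
proof (rule ccontr)
  assume "\<not> ?thesis"
  hence neg: "sin x - 2*x/pi < 0" by simp
  define F where "F = (\<lambda>x. sin x - 2*x/pi)"
  have D: "\<And>y. (F has_real_derivative (cos y - 2/pi)) (at y)"
    unfolding F_def by (auto intro!: derivative_eq_intros)
  have x0: "0 < x" using neg assms by (cases "x = 0") auto
  have x1: "x < pi/2" using neg assms by (cases "x = pi/2") auto
  obtain z1 where z1: "0 < z1" "z1 < x" "F x - F 0 = (x - 0) * (cos z1 - 2/pi)"
    using MVT2[OF x0, of F "\<lambda>y. cos y - 2/pi"] D by blast
  obtain z2 where z2: "x < z2" "z2 < pi/2" "F (pi/2) - F x = (pi/2 - x) * (cos z2 - 2/pi)"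
    using MVT2[OF x1, of F "\<lambda>y. cos y - 2/pi"] D by blast
  have "F x < 0" using neg unfolding F_def by simp
  moreover have "F 0 = 0" "F (pi/2) = 0" unfolding F_def by simp_all
  ultimately have c1: "cos z1 - 2/pi < 0" using z1 x0
    by (simp add: mult_less_0_iff)
  have "0 < -(x * (cos z1 - 2/pi))" using c1 x0 by (simp add: mult_pos_neg)
  also have "-(x * (cos z1 - 2/pi)) = (pi/2 - x) * (cos z2 - 2/pi)"
    using z1 z2 \<open>F 0 = 0\<close> \<open>F (pi/2) = 0\<close> by simp
  finally have "cos z2 - 2/pi > 0" using x1 by (simp add: zero_less_mult_iff)
  note c1 this
  moreover have "cos z2 < cos z1" using z1 z2 by (intro cos_monotone_0_pi) auto
  ultimately show False by simp
qed

lemma sin_pi_ge_dn: "2 * dn t \<le> \<bar>sin (pi * t)\<bar>"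
proof -
  define n where "n = round t"
  define s where "s = t - of_int n"
  have s: "\<bar>s\<bar> \<le> 1/2" unfolding s_def n_def using of_int_round_abs_le[of t] by (simp add: abs_minus_commute)
  have "dn t \<le> \<bar>s\<bar>" unfolding s_def by (rule dn_le)
  have "sin (pi * t) = sin (pi * s + pi * of_int n)" unfolding s_def by (simp add: algebra_simps)
  also have "\<dots> = sin (pi * s) * cos (pi * of_int n)" by (simp add: sin_add)
  finally have e1: "sin (pi * t) = sin (pi * s) * cos (pi * of_int n)" .
  have "\<bar>cos (pi * of_int n)\<bar> = 1"
    using sin_cos_squared_add[of "pi * of_int n"] by (simp add: abs_square_eq_1)
  hence "\<bar>sin (pi * t)\<bar> = \<bar>sin (pi * s)\<bar>" unfolding e1 by (simp add: abs_mult)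
  also have "\<dots> = sin (pi * abs s)"
  proof (cases "s \<ge> 0")
    case True
    have "0 \<le> sin (pi * s)" using s True by (intro sin_ge_zero) auto
    thus ?thesis using True by simp
  next
    case False
    have a: "0 \<le> -s" "-s \<le> 1" using s False by auto
    have "pi * (-s) \<le> pi * 1" using a by (intro mult_left_mono) auto
    moreover have "0 \<le> pi * (-s)" using a by (intro mult_nonneg_nonneg) auto
    ultimately have "0 \<le> sin (pi * (-s))" by (intro sin_ge_zero) auto
    thus ?thesis using False by simp
  qed
  also have "\<dots> \<ge> 2 * (pi * abs s) / pi" using s by (intro jordan) auto
  finally show ?thesis using \<open>dn t \<le> \<bar>s\<bar>\<close> by simp
qed

lemma norm_ee_minus1: "4 * dn t \<le> norm (ee t - 1)"
proof -
  have "norm (ee t - 1) ^ 2 = (cos (2*pi * t) - 1)^2 + (sin (2*pi * t))^2"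
    by (simp add: ee_def cmod_def cis.ctr)
  also have "\<dots> = 2 - 2 * cos (2*pi * t)" by (simp add: power2_eq_square algebra_simps sin_squared_eq)
  also have "\<dots> = 4 * (sin (pi * t))^2"
    using cos_double_sin[of "pi * t"] by (simp add: algebra_simps)
  finally have eq: "norm (ee t - 1) = 2 * \<bar>sin (pi * t)\<bar>"
    by (metis abs_mult_self_eq abs_of_nonneg norm_ge_zero power2_eq_square real_sqrt_abs2
        real_sqrt_mult real_sqrt_four abs_mult abs_numeral mult.assoc)
  show ?thesis unfolding eq using sin_pi_ge_dn[of t] by simp
qed

lemma geom_ee_bound:
  assumes "dn t > 0"
  shows "norm (\<Sum>k\<in>{M..<M+L::nat}. ee (real k * t)) \<le> 1 / (2 * dn t)"
proof -
  have ne: "ee t \<noteq> 1" using norm_ee_minus1[of t] assms by auto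
  have "(\<Sum>k\<in>{M..<M+L}. ee (real k * t)) = (\<Sum>k<L. ee (real (M + k) * t))"
    by (rule sum.reindex_bij_witness[of _ "\<lambda>k. k + M" "\<lambda>k. k - M"]) auto
  also have "\<dots> = ee (real M * t) * (\<Sum>k<L. ee t ^ k)"
    by (simp add: sum_distrib_left ee_pow ee_add[symmetric] algebra_simps)
  also have "\<dots> = ee (real M * t) * ((ee t ^ L - 1) / (ee t - 1))"
    using geometric_sum[OF ne] by simp
  finally have "norm (\<Sum>k\<in>{M..<M+L}. ee (real k * t)) = norm (ee t ^ L - 1) / norm (ee t - 1)"
    by (simp add: norm_mult norm_divide)
  also have "\<dots> \<le> 2 / norm (ee t - 1)"
  proof (rule divide_right_mono)
    show "norm (ee t ^ L - 1) \<le> 2"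
      using norm_triangle_ineq4[of "ee t ^ L" 1] by (simp add: norm_power)
  qed simp
  also have "\<dots> \<le> 2 / (4 * dn t)"
    using norm_ee_minus1[of t] assms by (intro divide_left_mono) (auto intro!: mult_pos_pos)
  finally show ?thesis by simp
qed

lemma cnj_ee: "cnj (ee t) = ee (- t)"
  by (simp add: ee_def cis.ctr complex_eq_iff)

lemma spacing_sum:
  fixes S :: "'a set" and \<alpha> :: "'a \<Rightarrow> real"
  assumes fin: "finite S" and d: "\<delta> > 0"
    and sp: "\<And>r s. r \<in> S \<Longrightarrow> s \<in> S \<Longrightarrow> r \<noteq> s \<Longrightarrow> \<delta> \<le> dn (\<alpha> r - \<alpha> s)"
    and r: "r \<in> S"
  shows "(\<Sum>s\<in>S-{r}. 1 / dn (\<alpha> s - \<alpha> r)) \<le> (2/\<delta>) * harm (nat \<lfloor>1/(2*\<delta>)\<rfloor>)"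
proof -
  define M where "M = nat \<lfloor>1/(2*\<delta>)\<rfloor>"
  define u where "u s = frac (\<alpha> s - \<alpha> r)" for s
  define m where "m s = nat \<lfloor>dn (\<alpha> s - \<alpha> r) / \<delta>\<rfloor>" for s
  define key where "key s = (u s \<le> 1/2, m s)" for s
  have dnu: "dn (\<alpha> s - \<alpha> r) = (if u s \<le> 1/2 then u s else 1 - u s)" for s
    unfolding dn_def u_def by auto
  have dge: "\<delta> \<le> dn (\<alpha> s - \<alpha> r)" if "s \<in> S-{r}" for s using sp[of s r] that r by auto
  have m1: "1 \<le> m s" if "s \<in> S-{r}" for s
  proof -
    have "1 \<le> dn (\<alpha> s - \<alpha> r) / \<delta>" using dge[OF that] d by simp
    thus ?thesis unfolding m_def by linarith
  qed
  have mM: "m s \<le> M" for s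
  proof -
    have "dn (\<alpha> s - \<alpha> r) / \<delta> \<le> 1/(2*\<delta>)" using dn_le_half[of "\<alpha> s - \<alpha> r"] d
      by (simp add: field_simps)
    thus ?thesis unfolding m_def M_def by (intro nat_mono floor_mono)
  qed
  have mle: "\<delta> * m s \<le> dn (\<alpha> s - \<alpha> r)" if "s \<in> S-{r}" for s
  proof -
    have "real (m s) \<le> dn (\<alpha> s - \<alpha> r) / \<delta>" unfolding m_def using dn_nonneg d
      by (simp add: of_nat_nat)
    thus ?thesis using d by (simp add: field_simps)
  qed
  have inj: "inj_on key (S-{r})"
  proof (rule inj_onI, rule ccontr)
    fix s s' assume s: "s \<in> S-{r}" and s': "s' \<in> S-{r}" and k: "key s = key s'" and ne: "s \<noteq> s'"
    have side: "(u s \<le> 1/2) = (u s' \<le> 1/2)" and mm: "m s = m s'" using k unfolding key_def by auto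
    have fl: "\<lfloor>dn (\<alpha> s - \<alpha> r) / \<delta>\<rfloor> = \<lfloor>dn (\<alpha> s' - \<alpha> r) / \<delta>\<rfloor>"
      using mm dn_nonneg d unfolding m_def by (simp add: nat_eq_iff2)
    hence "\<bar>dn (\<alpha> s - \<alpha> r) / \<delta> - dn (\<alpha> s' - \<alpha> r) / \<delta>\<bar> < 1" by linarith
    hence lt: "\<bar>dn (\<alpha> s - \<alpha> r) - dn (\<alpha> s' - \<alpha> r)\<bar> < \<delta>" using d
      by (simp add: diff_divide_distrib[symmetric] abs_divide)
    have "\<bar>u s - u s'\<bar> < \<delta>" using lt side dnu[of s] dnu[of s'] by (auto split: if_splits)
    moreover have "\<alpha> s - \<alpha> s' = (u s - u s') + of_int (\<lfloor>\<alpha> s - \<alpha> r\<rfloor> - \<lfloor>\<alpha> s' - \<alpha> r\<rfloor>)"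
      unfolding u_def frac_def by simp
    hence "dn (\<alpha> s - \<alpha> s') = dn (u s - u s')" by (simp only: dn_add_int)
    moreover have "dn (u s - u s') \<le> \<bar>u s - u s' - of_int 0\<bar>" by (rule dn_le)
    moreover have "\<delta> \<le> dn (\<alpha> s - \<alpha> s')" using sp[of s s'] s s' ne by auto
    ultimately show False by simp
  qed
  have "(\<Sum>s\<in>S-{r}. 1 / dn (\<alpha> s - \<alpha> r)) \<le> (\<Sum>s\<in>S-{r}. 1 / (\<delta> * m s))"
  proof (rule sum_mono)
    fix s assume s: "s \<in> S-{r}"
    have "0 < \<delta> * m s" using m1[OF s] d by simp
    thus "1 / dn (\<alpha> s - \<alpha> r) \<le> 1 / (\<delta> * m s)" using mle[OF s] by (intro divide_left_mono) auto
  qed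
  also have "\<dots> = (\<Sum>k\<in>key ` (S-{r}). 1 / (\<delta> * snd k))"
    using inj by (subst sum.reindex) (auto simp: key_def)
  also have "\<dots> \<le> (\<Sum>k\<in>(UNIV::bool set) \<times> {1..M}. 1 / (\<delta> * snd k))"
  proof (intro sum_mono2)
    show "key ` (S-{r}) \<subseteq> UNIV \<times> {1..M}" using m1 mM unfolding key_def by auto
  qed (use d in auto)
  also have "\<dots> = 2 * (\<Sum>k\<in>{1..M}. 1 / (\<delta> * k))"
    by (simp add: sum.cartesian_product' UNIV_bool)
  also have "(\<Sum>k\<in>{1..M}. 1 / (\<delta> * k)) = (1/\<delta>) * harm M"
    by (simp add: harm_def sum_distrib_left field_simps)
  finally show ?thesis unfolding M_def by simp
qed

lemma sum_minus_if: "finite R \<Longrightarrow> (\<Sum>s\<in>R-{r}. f s) = (\<Sum>s\<in>R. if s = r then 0 else f s)"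
  by (rule sum.mono_neutral_cong_left) auto

lemma large_sieve:
  fixes R :: "'a set" and \<alpha> :: "'a \<Rightarrow> real" and A :: "'a \<Rightarrow> complex"
  assumes fin: "finite R" and d: "\<delta> > 0"
    and sp: "\<And>r s. r \<in> R \<Longrightarrow> s \<in> R \<Longrightarrow> r \<noteq> s \<Longrightarrow> \<delta> \<le> dn (\<alpha> r - \<alpha> s)"
  shows "(\<Sum>k\<in>{M..<M+L}. (norm (\<Sum>r\<in>R. A r * ee (real k * \<alpha> r)))^2)
          \<le> (real L + harm (nat \<lfloor>1/(2*\<delta>)\<rfloor>) / \<delta>) * (\<Sum>r\<in>R. (norm (A r))^2)"
proof -
  define K where "K = {M..<M+L}"
  define E where "E t = (\<Sum>k\<in>K. ee (real k * t))" for t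
  define H :: real where "H = harm (nat \<lfloor>1/(2*\<delta>)\<rfloor>)"
  define a where "a r = norm (A r)" for r
  define w where "w r s = 1 / (2 * dn (\<alpha> r - \<alpha> s))" for r s
  have wsym: "w r s = w s r" for r s unfolding w_def using dn_minus[of "\<alpha> r - \<alpha> s"] by simp
  have w0: "0 \<le> w r s" for r s unfolding w_def using dn_nonneg by simp
  have sq: "complex_of_real ((norm (\<Sum>r\<in>R. A r * ee (real k * \<alpha> r)))^2)
      = (\<Sum>r\<in>R. \<Sum>s\<in>R. A r * cnj (A s) * ee (real k * (\<alpha> r - \<alpha> s)))" for k
  proof -
    have "complex_of_real ((norm (\<Sum>r\<in>R. A r * ee (real k * \<alpha> r)))^2)
        = (\<Sum>r\<in>R. A r * ee (real k * \<alpha> r)) * cnj (\<Sum>r\<in>R. A r * ee (real k * \<alpha> r))"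
      by (rule complex_norm_square)
    also have "\<dots> = (\<Sum>r\<in>R. \<Sum>s\<in>R. (A r * ee (real k * \<alpha> r)) * (cnj (A s) * ee (- (real k * \<alpha> s))))"
      by (simp add: cnj_sum sum_product cnj_ee)
    also have "\<dots> = (\<Sum>r\<in>R. \<Sum>s\<in>R. A r * cnj (A s) * ee (real k * (\<alpha> r - \<alpha> s)))"
      by (intro sum.cong refl) (simp add: ee_add[symmetric] right_diff_distrib algebra_simps)
    finally show ?thesis .
  qed
  have "complex_of_real (\<Sum>k\<in>K. (norm (\<Sum>r\<in>R. A r * ee (real k * \<alpha> r)))^2)
      = (\<Sum>k\<in>K. \<Sum>r\<in>R. \<Sum>s\<in>R. A r * cnj (A s) * ee (real k * (\<alpha> r - \<alpha> s)))"
    unfolding of_real_sum by (rule sum.cong[OF refl sq])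
  also have "\<dots> = (\<Sum>r\<in>R. \<Sum>s\<in>R. \<Sum>k\<in>K. A r * cnj (A s) * ee (real k * (\<alpha> r - \<alpha> s)))"
    by (subst sum.swap) (simp add: sum.swap[of _ K])
  also have "\<dots> = (\<Sum>r\<in>R. \<Sum>s\<in>R. A r * cnj (A s) * E (\<alpha> r - \<alpha> s))"
    by (simp add: E_def sum_distrib_left)
  finally have eq: "complex_of_real (\<Sum>k\<in>K. (norm (\<Sum>r\<in>R. A r * ee (real k * \<alpha> r)))^2)
      = (\<Sum>r\<in>R. \<Sum>s\<in>R. A r * cnj (A s) * E (\<alpha> r - \<alpha> s))" .
  have "(\<Sum>k\<in>K. (norm (\<Sum>r\<in>R. A r * ee (real k * \<alpha> r)))^2)
      = norm (complex_of_real (\<Sum>k\<in>K. (norm (\<Sum>r\<in>R. A r * ee (real k * \<alpha> r)))^2))"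
    by (simp only: norm_of_real abs_of_nonneg[OF sum_nonneg[OF zero_le_power2]])
  also have "\<dots> \<le> (\<Sum>r\<in>R. \<Sum>s\<in>R. a r * a s * norm (E (\<alpha> r - \<alpha> s)))"
    unfolding eq a_def
    by (rule order.trans[OF norm_sum sum_mono], rule order.trans[OF norm_sum sum_mono])
       (simp add: norm_mult)
  also have "\<dots> \<le> (\<Sum>r\<in>R. real L * (a r)^2 + (\<Sum>s\<in>R-{r}. ((a r)^2 + (a s)^2) * w r s / 2))"
  proof (rule sum_mono)
    fix r assume r: "r \<in> R"
    have "(\<Sum>s\<in>R. a r * a s * norm (E (\<alpha> r - \<alpha> s)))
        = a r * a r * norm (E (\<alpha> r - \<alpha> r)) + (\<Sum>s\<in>R-{r}. a r * a s * norm (E (\<alpha> r - \<alpha> s)))"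
      using fin r by (simp add: sum.remove)
    also have "norm (E (\<alpha> r - \<alpha> r)) = real L" unfolding E_def K_def using ee_int[of 0] by (simp add: norm_mult)
    also have "(\<Sum>s\<in>R-{r}. a r * a s * norm (E (\<alpha> r - \<alpha> s))) \<le> (\<Sum>s\<in>R-{r}. ((a r)^2 + (a s)^2) * w r s / 2)"
    proof (rule sum_mono)
      fix s assume s: "s \<in> R-{r}"
      have dpos: "0 < dn (\<alpha> r - \<alpha> s)" using sp[of r s] r s d by auto
      have "norm (E (\<alpha> r - \<alpha> s)) \<le> w r s"
        unfolding E_def K_def w_def using geom_ee_bound[OF dpos] by simp
      moreover have "a r * a s \<le> ((a r)^2 + (a s)^2) / 2"
        using sum_squares_bound[of "a r" "a s"] by (simp add: power2_eq_square field_simps)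
      moreover have "0 \<le> a r * a s" "0 \<le> norm (E (\<alpha> r - \<alpha> s))" unfolding a_def by simp_all
      ultimately have "a r * a s * norm (E (\<alpha> r - \<alpha> s)) \<le> ((a r)^2 + (a s)^2) / 2 * w r s"
        by (intro mult_mono) (auto simp: add_nonneg_nonneg)
      thus "a r * a s * norm (E (\<alpha> r - \<alpha> s)) \<le> ((a r)^2 + (a s)^2) * w r s / 2" by simp
    qed
    finally show "(\<Sum>s\<in>R. a r * a s * norm (E (\<alpha> r - \<alpha> s)))
       \<le> real L * (a r)^2 + (\<Sum>s\<in>R-{r}. ((a r)^2 + (a s)^2) * w r s / 2)"
      by (simp add: power2_eq_square algebra_simps)
  qed
  also have "\<dots> = real L * (\<Sum>r\<in>R. (a r)^2) + (\<Sum>r\<in>R. (a r)^2 * (\<Sum>s\<in>R-{r}. w r s))"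
  proof -
    have off: "(\<Sum>r\<in>R. \<Sum>s\<in>R-{r}. (a s)^2 * w r s) = (\<Sum>r\<in>R. \<Sum>s\<in>R-{r}. (a r)^2 * w r s)"
    proof -
      have "(\<Sum>r\<in>R. \<Sum>s\<in>R-{r}. (a s)^2 * w r s) = (\<Sum>r\<in>R. \<Sum>s\<in>R. if s = r then 0 else (a s)^2 * w r s)"
        by (rule sum.cong[OF refl], rule sum_minus_if[OF fin])
      also have "\<dots> = (\<Sum>s\<in>R. \<Sum>r\<in>R. if s = r then 0 else (a s)^2 * w r s)" by (rule sum.swap)
      also have "\<dots> = (\<Sum>s\<in>R. \<Sum>r\<in>R-{s}. (a s)^2 * w s r)"
        by (rule sum.cong[OF refl]) (auto simp: sum_minus_if[OF fin] wsym intro!: sum.cong)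
      finally show ?thesis .
    qed
    have "(\<Sum>r\<in>R. real L * (a r)^2 + (\<Sum>s\<in>R-{r}. ((a r)^2 + (a s)^2) * w r s / 2))
        = real L * (\<Sum>r\<in>R. (a r)^2) + ((\<Sum>r\<in>R. \<Sum>s\<in>R-{r}. (a r)^2 * w r s)
            + (\<Sum>r\<in>R. \<Sum>s\<in>R-{r}. (a s)^2 * w r s)) / 2"
      by (simp add: sum.distrib sum_distrib_left sum_divide_distrib distrib_right add_divide_distrib)
    also have "\<dots> = real L * (\<Sum>r\<in>R. (a r)^2) + (\<Sum>r\<in>R. \<Sum>s\<in>R-{r}. (a r)^2 * w r s)"
      unfolding off by simp
    finally show ?thesis by (simp add: sum_distrib_left)
  qed
  also have "\<dots> \<le> real L * (\<Sum>r\<in>R. (a r)^2) + (\<Sum>r\<in>R. (a r)^2 * (H / \<delta>))"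
  proof (intro add_left_mono sum_mono mult_left_mono)
    fix r assume r: "r \<in> R"
    have "(\<Sum>s\<in>R-{r}. w r s) = (\<Sum>s\<in>R-{r}. 1 / dn (\<alpha> s - \<alpha> r)) / 2"
      unfolding w_def sum_divide_distrib
    proof (rule sum.cong[OF refl])
      fix s show "1 / (2 * dn (\<alpha> r - \<alpha> s)) = 1 / dn (\<alpha> s - \<alpha> r) / 2"
        using dn_minus[of "\<alpha> s - \<alpha> r"] by simp
    qed
    also have "\<dots> \<le> ((2/\<delta>) * H) / 2"
      unfolding H_def by (intro divide_right_mono spacing_sum[OF fin d sp r]) auto
    finally show "(\<Sum>s\<in>R-{r}. w r s) \<le> H / \<delta>" by simp
  qed simp
  also have "\<dots> = (real L + H / \<delta>) * (\<Sum>r\<in>R. (a r)^2)"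
    by (simp add: sum_distrib_left sum_distrib_right algebra_simps sum.distrib)
  finally show ?thesis unfolding K_def H_def a_def .
qed

lemma ee_eq_1_int: assumes "ee t = 1" shows "t = of_int \<lfloor>t\<rfloor>"
proof -
  have "dn t = 0" using norm_ee_minus1[of t] dn_nonneg[of t] assms by simp
  thus ?thesis unfolding dn_def frac_def using frac_lt_1[of t] unfolding frac_def
    by (auto simp: min_def split: if_splits)
qed

lemma root_filter:
  assumes d: "d > 0"
  shows "(\<Sum>a<d. ee (real a * real m / real d)) = (if d dvd m then of_nat d else 0)"
proof -
  define z where "z = ee (real m / real d)"
  have za: "ee (real a * real m / real d) = z ^ a" for a
    unfolding z_def ee_pow by simp
  show ?thesis
  proof (cases "d dvd m")
    case True
    then obtain c where c: "m = d * c" by blast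
    have "real m / real d = of_int (int c)" using d c by simp
    hence "z = 1" unfolding z_def by (simp only: ee_int)
    thus ?thesis using True by (simp add: za)
  next
    case False
    have "z \<noteq> 1"
    proof
      assume "z = 1"
      hence e: "real m / real d = of_int \<lfloor>real m / real d\<rfloor>" unfolding z_def by (rule ee_eq_1_int)
      have "real m = real d * of_int \<lfloor>real m / real d\<rfloor>" using d by (subst e[symmetric]) simp
      hence "int m = int d * \<lfloor>real m / real d\<rfloor>" by (metis of_int_eq_iff of_int_mult of_int_of_nat_eq)
      hence "int d dvd int m" by simp
      thus False using False by simp
    qed
    moreover have "z ^ d = 1" unfolding z_def ee_pow using d
      by (simp add: ee_int[of "int m", simplified])
    ultimately show ?thesis using False by (simp add: za geometric_sum)
  qed
qed

lemma expand_d: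
  fixes \<psi> :: "nat \<Rightarrow> real"
  assumes d: "d > 0"
  shows "complex_of_real ((\<Sum>i<L. \<psi> i * of_bool (d dvd m + i)) - (\<Sum>i<L. \<psi> i) / real d)
    = (\<Sum>a\<in>{1..<d}. ee (real a * real m / real d) *
          ((1 / of_nat d) * (\<Sum>i<L. of_real (\<psi> i) * ee (real a * real i / real d))))"
proof -
  have filt: "complex_of_real (of_bool (d dvd m + i)) = (1 / of_nat d) * (\<Sum>a<d. ee (real a * real (m + i) / real d))" for i
    using root_filter[OF d, of "m+i"] d by simp
  have split: "(\<Sum>a<d. F a) = F 0 + (\<Sum>a\<in>{1..<d}. F a)" for F :: "nat \<Rightarrow> complex"
  proof -
    have "{..<d} = insert 0 {1..<d}" using d by auto
    thus ?thesis by simp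
  qed
  have "complex_of_real (\<Sum>i<L. \<psi> i * of_bool (d dvd m + i))
      = (\<Sum>i<L. of_real (\<psi> i) * ((1 / of_nat d) * (\<Sum>a<d. ee (real a * real (m + i) / real d))))"
    unfolding of_real_sum of_real_mult by (rule sum.cong[OF refl]) (simp only: filt)
  also have "\<dots> = (\<Sum>a<d. \<Sum>i<L. of_real (\<psi> i) * ((1 / of_nat d) * ee (real a * real (m + i) / real d)))"
    by (simp add: sum_distrib_left sum.swap[of _ "{..<d}"])
  also have "\<dots> = (\<Sum>i<L. of_real (\<psi> i) * (1 / of_nat d)) +
      (\<Sum>a\<in>{1..<d}. \<Sum>i<L. of_real (\<psi> i) * ((1 / of_nat d) * ee (real a * real (m + i) / real d)))"
    by (subst split) (simp add: ee_int[of 0, simplified])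
  also have "(\<Sum>a\<in>{1..<d}. \<Sum>i<L. of_real (\<psi> i) * ((1 / of_nat d) * ee (real a * real (m + i) / real d)))
     = (\<Sum>a\<in>{1..<d}. ee (real a * real m / real d) *
          ((1 / of_nat d) * (\<Sum>i<L. of_real (\<psi> i) * ee (real a * real i / real d))))"
  proof (rule sum.cong[OF refl])
    fix a
    have "ee (real a * real (m + i) / real d) = ee (real a * real m / real d) * ee (real a * real i / real d)" for i
      by (simp add: ee_add[symmetric] add_divide_distrib distrib_left)
    thus "(\<Sum>i<L. of_real (\<psi> i) * ((1 / of_nat d) * ee (real a * real (m + i) / real d))) =
       ee (real a * real m / real d) * ((1 / of_nat d) * (\<Sum>i<L. of_real (\<psi> i) * ee (real a * real i / real d)))"
      by (simp add: sum_distrib_left algebra_simps)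
  qed
  finally show ?thesis by (simp add: sum_divide_distrib)
qed

definition Rset :: "nat \<Rightarrow> (nat \<times> nat) set" where
  "Rset Q = {(q,b). 1 \<le> q \<and> q \<le> Q \<and> 1 \<le> b \<and> b < q \<and> coprime b q}"
definition Gq :: "(nat \<Rightarrow> real) \<Rightarrow> nat \<Rightarrow> nat \<Rightarrow> real" where
  "Gq g Q q = (\<Sum>t\<in>{1..Q div q}. g (q*t) / real t)"
definition Cq :: "(nat \<Rightarrow> real) \<Rightarrow> nat \<Rightarrow> nat \<Rightarrow> nat \<Rightarrow> complex" where
  "Cq \<psi> L q b = (1 / of_nat q) * (\<Sum>i<L. of_real (\<psi> i) * ee (real b * real i / real q))"

lemma finite_Rset: "finite (Rset Q)"
  by (rule finite_subset[of _ "{1..Q} \<times> {1..Q}"]) (auto simp: Rset_def)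

lemma sum_reindex_qbt:
  fixes F :: "nat \<Rightarrow> nat \<Rightarrow> 'b::comm_monoid_add"
  shows "(\<Sum>d\<in>{1..Q}. \<Sum>a\<in>{1..<d}. F d a) = (\<Sum>(q,b)\<in>Rset Q. \<Sum>t\<in>{1..Q div q}. F (q*t) (b*t))"
proof -
  have "(\<Sum>d\<in>{1..Q}. \<Sum>a\<in>{1..<d}. F d a) = (\<Sum>(d,a)\<in>Sigma {1..Q} (\<lambda>d. {1..<d}). F d a)"
    by (rule sum.Sigma) auto
  also have "\<dots> = (\<Sum>((q,b),t)\<in>Sigma (Rset Q) (\<lambda>(q,b). {1..Q div q}). F (q*t) (b*t))"
  proof (rule sum.reindex_bij_witness[of _ "\<lambda>((q,b),t). (q*t, b*t)"
         "\<lambda>(d,a). ((d div gcd a d, a div gcd a d), gcd a d)"])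
    fix x assume x: "x \<in> Sigma (Rset Q) (\<lambda>(q,b). {1..Q div q})"
    then obtain q b t where xe: "x = ((q,b),t)" and qb: "(q,b) \<in> Rset Q" and t: "t \<in> {1..Q div q}"
      by auto
    have cop: "coprime b q" and q: "1 \<le> q" "q \<le> Q" and b: "1 \<le> b" "b < q" using qb by (auto simp: Rset_def)
    have g: "gcd (b*t) (q*t) = t" using cop by (metis coprime_iff_gcd_eq_1 gcd_mult_distrib_nat mult.commute mult_1_right)
    have t1: "1 \<le> t" and tq: "q * t \<le> Q" using t q by (auto simp: less_eq_div_iff_mult_less_eq mult.commute)
    show "(\<lambda>(d,a). ((d div gcd a d, a div gcd a d), gcd a d)) ((\<lambda>((q,b),t). (q*t, b*t)) x) = x"
      using xe g t1 by simp
    show "(\<lambda>((q,b),t). (q*t, b*t)) x \<in> Sigma {1..Q} (\<lambda>d. {1..<d})"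
      using xe q b t1 tq by (auto simp: mult_le_mono)
  next
    fix y assume y: "y \<in> Sigma {1..Q} (\<lambda>d. {1..<d})"
    then obtain d a where ye: "y = (d,a)" and d: "1 \<le> d" "d \<le> Q" and a: "1 \<le> a" "a < d" by auto
    define g where "g = gcd a d"
    have g0: "0 < g" using a unfolding g_def by simp
    have gd: "g dvd d" "g dvd a" unfolding g_def by auto
    have dd: "d div g * g = d" "a div g * g = a" using gd by simp_all
    have cop: "coprime (a div g) (d div g)" unfolding g_def using a by (intro div_gcd_coprime) auto
    have lt: "a div g < d div g"
    proof (rule ccontr)
      assume "\<not> ?thesis"
      hence "d div g \<le> a div g" by simp
      hence "d div g * g \<le> a div g * g" by (rule mult_le_mono1)
      thus False using dd a by simp
    qed
    have a1: "1 \<le> a div g" using dd(2) a by (cases "a div g = 0") auto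
    have dpos: "0 < d div g" using lt by simp
    have dQ: "d div g \<le> Q" using d div_le_dividend[of d g] by linarith
    have gQ: "g \<le> Q div (d div g)"
      using dpos dd d by (simp add: less_eq_div_iff_mult_less_eq mult.commute)
    show "(\<lambda>((q,b),t). (q*t, b*t)) ((\<lambda>(d,a). ((d div gcd a d, a div gcd a d), gcd a d)) y) = y"
      using ye dd unfolding g_def by simp
    show "(\<lambda>(d,a). ((d div gcd a d, a div gcd a d), gcd a d)) y \<in> Sigma (Rset Q) (\<lambda>(q,b). {1..Q div q})"
      using ye cop lt a1 dQ gQ g0 by (simp add: Rset_def g_def[symmetric])
    show "(case case y of (d, a) \<Rightarrow> ((d div gcd a d, a div gcd a d), gcd a d) of
         (x, xa) \<Rightarrow> (case x of (q, b) \<Rightarrow> \<lambda>t. F (q * t) (b * t)) xa) = (case y of (d, a) \<Rightarrow> F d a)"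
      using ye dd by (simp add: g_def[symmetric])
  qed
  also have "\<dots> = (\<Sum>(q,b)\<in>Rset Q. \<Sum>t\<in>{1..Q div q}. F (q*t) (b*t))"
    by (subst sum.Sigma[symmetric]) (auto simp: finite_Rset split_beta)
  finally show ?thesis .
qed

lemma expansion:
  fixes g :: "nat \<Rightarrow> real" and \<psi> :: "nat \<Rightarrow> real"
  shows "complex_of_real (\<Sum>d\<in>{1..Q}. g d * ((\<Sum>i<L. \<psi> i * of_bool (d dvd m + i)) - (\<Sum>i<L. \<psi> i) / real d))
     = (\<Sum>(q,b)\<in>Rset Q. of_real (Gq g Q q) * Cq \<psi> L q b * ee (real m * (real b / real q)))"
proof -
  define F where "F d a = of_real (g d) * (ee (real a * real m / real d) *
          ((1 / of_nat d) * (\<Sum>i<L. of_real (\<psi> i) * ee (real a * real i / real d))))" for d a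
  have "complex_of_real (\<Sum>d\<in>{1..Q}. g d * ((\<Sum>i<L. \<psi> i * of_bool (d dvd m + i)) - (\<Sum>i<L. \<psi> i) / real d))
      = (\<Sum>d\<in>{1..Q}. \<Sum>a\<in>{1..<d}. F d a)"
    unfolding of_real_sum
  proof (rule sum.cong[OF refl])
    fix d assume "d \<in> {1..Q}"
    hence d: "d > 0" by simp
    show "complex_of_real (g d * ((\<Sum>i<L. \<psi> i * of_bool (d dvd m + i)) - (\<Sum>i<L. \<psi> i) / real d))
       = (\<Sum>a\<in>{1..<d}. F d a)"
      unfolding of_real_mult expand_d[OF d] F_def by (simp add: sum_distrib_left)
  qed
  also have "\<dots> = (\<Sum>(q,b)\<in>Rset Q. \<Sum>t\<in>{1..Q div q}. F (q*t) (b*t))" by (rule sum_reindex_qbt)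
  also have "\<dots> = (\<Sum>(q,b)\<in>Rset Q. of_real (Gq g Q q) * Cq \<psi> L q b * ee (real m * (real b / real q)))"
  proof (rule sum.cong[OF refl], clarify)
    fix q b assume qb: "(q,b) \<in> Rset Q"
    hence q: "q > 0" by (auto simp: Rset_def)
    have "F (q*t) (b*t) = of_real (g (q*t) / real t) * Cq \<psi> L q b * ee (real m * (real b / real q))"
      if t: "t \<in> {1..Q div q}" for t
    proof -
      have t0: "real t > 0" using t by simp
      have e1: "real (b*t) * real m / real (q*t) = real m * (real b / real q)" using t0 q by (simp add: field_simps)
      have e2: "real (b*t) * real i / real (q*t) = real b * real i / real q" for i using t0 q by (simp add: field_simps)
      show ?thesis unfolding F_def Cq_def e1 e2 using t0 q by (simp add: field_simps)
    qed
    hence "(\<Sum>t\<in>{1..Q div q}. F (q*t) (b*t)) = (\<Sum>t\<in>{1..Q div q}. of_real (g (q*t) / real t)) * Cq \<psi> L q b * ee (real m * (real b / real q))"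
      by (simp add: sum_distrib_right)
    thus "(\<Sum>t\<in>{1..Q div q}. F (q*t) (b*t)) = of_real (Gq g Q q) * Cq \<psi> L q b * ee (real m * (real b / real q))"
      unfolding Gq_def of_real_sum .
  qed
  finally show ?thesis .
qed

lemma Rset_spacing:
  assumes r: "(q,b) \<in> Rset Q" and s: "(q',b') \<in> Rset Q" and ne: "(q,b) \<noteq> (q',b')"
  shows "1 / (real Q)^2 \<le> dn (real b / real q - real b' / real q')"
proof (rule dn_ge)
  fix n :: int
  from r have q: "1 \<le> q" "q \<le> Q" "1 \<le> b" "b < q" "coprime b q" by (auto simp: Rset_def)
  from s have q': "1 \<le> q'" "q' \<le> Q" "1 \<le> b'" "b' < q'" "coprime b' q'" by (auto simp: Rset_def)
  define N0 :: int where "N0 = int b * int q' - int b' * int q - n * int q * int q'"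
  have qq: "real q * real q' > 0" using q q' by simp
  have eq: "real b / real q - real b' / real q' - of_int n = of_int N0 / (real q * real q')"
    unfolding N0_def using q q' by (simp add: field_simps)
  have "N0 \<noteq> 0"
  proof
    assume N0: "N0 = 0"
    have lt1: "int b * int q' < int q * int q'" using q q' by simp
    have lt2: "int b' * int q < int q * int q'" using q q' by (simp add: mult.commute)
    have pos1: "0 < int b * int q'" "0 < int b' * int q" using q q' by simp_all
    have "n * (int q * int q') = int b * int q' - int b' * int q" using N0 unfolding N0_def by (simp add: algebra_simps)
    moreover have "\<bar>int b * int q' - int b' * int q\<bar> < int q * int q'" using lt1 lt2 pos1 by linarith
    ultimately have "\<bar>n\<bar> * (int q * int q') < 1 * (int q * int q')" by (simp add: abs_mult)
    hence "\<bar>n\<bar> < 1" using q q' by (simp only: mult_less_cancel_right) simp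
    hence n0: "n = 0" by simp
    hence bb: "b * q' = b' * q" using N0 unfolding N0_def by (simp add: of_nat_mult[symmetric] del: of_nat_mult)
    have "q dvd b * q'" using bb by simp
    hence d1: "q dvd q'" using q(5) by (metis coprime_commute coprime_dvd_mult_right_iff)
    have "q' dvd b' * q" using bb[symmetric] by simp
    hence d2: "q' dvd q" using q'(5) by (metis coprime_commute coprime_dvd_mult_right_iff)
    have "q = q'" using d1 d2 by (simp add: dvd_antisym)
    moreover hence "b = b'" using bb q by simp
    ultimately show False using ne by simp
  qed
  hence "1 \<le> \<bar>of_int N0 :: real\<bar>" by linarith
  have "1 / (real Q)^2 \<le> 1 / (real q * real q')"
  proof (rule divide_left_mono)
    show "real q * real q' \<le> (real Q)^2" using q q' by (simp add: power2_eq_square mult_mono)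
  qed (use qq q in \<open>auto intro!: mult_pos_pos\<close>)
  also have "\<dots> \<le> \<bar>of_int N0\<bar> / (real q * real q')"
    using \<open>1 \<le> \<bar>of_int N0 :: real\<bar>\<close> qq by (simp add: divide_right_mono)
  also have "\<dots> = \<bar>real b / real q - real b' / real q' - of_int n\<bar>" unfolding eq using qq by (simp add: abs_divide)
  finally show "1 / (real Q)^2 \<le> \<bar>real b / real q - real b' / real q' - of_int n\<bar>" .
qed

lemma dn_frac_bq:
  assumes "1 \<le> b" "b < q"
  shows "dn (real b / real q) = min (real b / real q) (1 - real b / real q)"
proof -
  have "frac (real b / real q) = real b / real q" using assms by (simp add: frac_eq)
  thus ?thesis unfolding dn_def by simp
qed

lemma sum_inv_dn:
  assumes q: "q \<ge> 1"
  shows "(\<Sum>b\<in>{1..<q}. 1 / dn (real b / real q)) \<le> 2 * real q * harm q"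
proof -
  have "(\<Sum>b\<in>{1..<q}. 1 / dn (real b / real q)) \<le> (\<Sum>b\<in>{1..<q}. real q / real b + real q / real (q - b))"
  proof (rule sum_mono)
    fix b assume b: "b \<in> {1..<q}"
    have bq: "real b < real q" "1 \<le> real b" using b by auto
    have qb: "real (q - b) = real q - real b" using b by simp
    show "1 / dn (real b / real q) \<le> real q / real b + real q / real (q - b)"
    proof (cases "real b / real q \<le> 1 - real b / real q")
      case True
      hence "dn (real b / real q) = real b / real q" using b by (simp add: dn_frac_bq)
      moreover have "0 \<le> real q / real (q - b)" by simp
      ultimately show ?thesis by simp
    next
      case False
      hence "dn (real b / real q) = 1 - real b / real q" using b by (simp add: dn_frac_bq)
      also have "\<dots> = real (q - b) / real q" using qb bq by (simp add: field_simps)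
      finally have "1 / dn (real b / real q) = real q / real (q - b)" by simp
      moreover have "0 \<le> real q / real b" by simp
      ultimately show ?thesis by simp
    qed
  qed
  also have "\<dots> = (\<Sum>b\<in>{1..<q}. real q / real b) + (\<Sum>b\<in>{1..<q}. real q / real (q - b))"
    by (simp add: sum.distrib)
  also have "(\<Sum>b\<in>{1..<q}. real q / real (q - b)) = (\<Sum>b\<in>{1..<q}. real q / real b)"
    by (rule sum.reindex_bij_witness[of _ "\<lambda>b. q - b" "\<lambda>b. q - b"]) auto
  also have "(\<Sum>b\<in>{1..<q}. real q / real b) \<le> (\<Sum>b\<in>{1..q}. real q / real b)"
    by (rule sum_mono2) auto
  also have "(\<Sum>b\<in>{1..q}. real q / real b) = real q * harm q"
    by (simp add: harm_def sum_distrib_left divide_inverse)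
  finally show ?thesis by (simp add: algebra_simps)
qed

lemma dn_bq_pos: "1 \<le> b \<Longrightarrow> b < q \<Longrightarrow> 0 < dn (real b / real q)"
  by (simp add: dn_frac_bq)

lemma Cq_bound:
  assumes p1: "\<And>i. i < h \<Longrightarrow> \<psi> i = e1" and p2: "\<And>i. h \<le> i \<Longrightarrow> i < 2*h \<Longrightarrow> \<psi> i = e2"
    and e: "\<bar>e1\<bar> \<le> 1" "\<bar>e2\<bar> \<le> 1" and b: "1 \<le> b" "b < q"
  shows "(norm (Cq \<psi> (2*h) q b))^2 \<le> 2 * real h / ((real q)^2 * dn (real b / real q))"
proof -
  define \<beta> where "\<beta> = real b / real q"
  define S where "S = (\<Sum>i<2*h. of_real (\<psi> i) * ee (real b * real i / real q))"
  have dp: "0 < dn \<beta>" unfolding \<beta>_def using b by (rule dn_bq_pos)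
  have ee_eq: "ee (real b * real i / real q) = ee (real i * \<beta>)" for i unfolding \<beta>_def by (simp add: mult.commute)
  have S1: "norm S \<le> 2 * real h"
  proof -
    have "norm S \<le> (\<Sum>i<2*h. norm (of_real (\<psi> i) * ee (real b * real i / real q)))"
      unfolding S_def by (rule norm_sum)
    also have "\<dots> \<le> (\<Sum>i<2*h. 1)"
    proof (rule sum_mono)
      fix i assume "i \<in> {..<2*h}"
      hence "\<bar>\<psi> i\<bar> \<le> 1" using p1[of i] p2[of i] e by (cases "i < h") auto
      thus "norm (of_real (\<psi> i) * ee (real b * real i / real q)) \<le> 1" by (simp add: norm_mult)
    qed
    finally show ?thesis by simp
  qed
  have split: "{..<2*h} = {0..<0+h} \<union> {h..<h+h}" by auto
  have "S = (\<Sum>i\<in>{0..<0+h}. of_real (\<psi> i) * ee (real i * \<beta>)) + (\<Sum>i\<in>{h..<h+h}. of_real (\<psi> i) * ee (real i * \<beta>))"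
    unfolding S_def split ee_eq by (subst sum.union_disjoint) auto
  also have "\<dots> = of_real e1 * (\<Sum>i\<in>{0..<0+h}. ee (real i * \<beta>)) + of_real e2 * (\<Sum>i\<in>{h..<h+h}. ee (real i * \<beta>))"
    using p1 p2 by (simp add: sum_distrib_left)
  finally have "norm S \<le> \<bar>e1\<bar> * norm (\<Sum>i\<in>{0..<0+h}. ee (real i * \<beta>)) + \<bar>e2\<bar> * norm (\<Sum>i\<in>{h..<h+h}. ee (real i * \<beta>))"
    by (metis norm_mult norm_of_real norm_triangle_ineq)
  also have "\<dots> \<le> 1 * (1 / (2 * dn \<beta>)) + 1 * (1 / (2 * dn \<beta>))"
    by (intro add_mono mult_mono e geom_ee_bound dp) auto
  finally have S2: "norm S \<le> 1 / dn \<beta>" by simp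
  have "(norm S)^2 \<le> (2 * real h) * (1 / dn \<beta>)"
    unfolding power2_eq_square by (intro mult_mono S1 S2) auto
  moreover have "Cq \<psi> (2*h) q b = S / of_nat q" unfolding Cq_def S_def by simp
  ultimately have "(norm (Cq \<psi> (2*h) q b))^2 = (norm S)^2 / (real q)^2"
    by (simp add: norm_divide power_divide)
  also have "\<dots> \<le> ((2 * real h) * (1 / dn \<beta>)) / (real q)^2"
    using \<open>(norm S)^2 \<le> _\<close> by (rule divide_right_mono) simp
  finally show ?thesis unfolding \<beta>_def by (simp add: mult.commute)
qed

lemma Gq_bound:
  assumes g: "\<And>d. 1 \<le> d \<Longrightarrow> d \<le> Q \<Longrightarrow> \<bar>g d\<bar> \<le> Gb" and q: "1 \<le> q" and Gb: "0 \<le> Gb"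
  shows "\<bar>Gq g Q q\<bar> \<le> Gb * harm Q"
proof -
  have "\<bar>Gq g Q q\<bar> \<le> (\<Sum>t\<in>{1..Q div q}. \<bar>g (q*t) / real t\<bar>)" unfolding Gq_def by (rule sum_abs)
  also have "\<dots> \<le> (\<Sum>t\<in>{1..Q div q}. Gb * inverse (real t))"
  proof (rule sum_mono)
    fix t assume t: "t \<in> {1..Q div q}"
    hence "q * t \<le> Q" using q by (simp add: less_eq_div_iff_mult_less_eq mult.commute)
    moreover have "1 \<le> q * t" using q t by simp
    ultimately have "\<bar>g (q*t)\<bar> \<le> Gb" using g by blast
    thus "\<bar>g (q*t) / real t\<bar> \<le> Gb * inverse (real t)" using t
      by (simp add: divide_inverse abs_mult mult_right_mono)
  qed
  also have "\<dots> = Gb * harm (Q div q)" by (simp add: harm_def sum_distrib_left)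
  also have "\<dots> \<le> Gb * harm Q"
  proof (rule mult_left_mono)
    show "harm (Q div q) \<le> (harm Q :: real)" by (rule harm_mono) simp
    show "0 \<le> Gb" by (rule Gb)
  qed
  finally show ?thesis .
qed

lemma A_bound:
  assumes g: "\<And>d. 1 \<le> d \<Longrightarrow> d \<le> Q \<Longrightarrow> \<bar>g d\<bar> \<le> Gb" and Gb: "0 \<le> Gb"
    and p1: "\<And>i. i < h \<Longrightarrow> \<psi> i = e1" and p2: "\<And>i. h \<le> i \<Longrightarrow> i < 2*h \<Longrightarrow> \<psi> i = e2"
    and e: "\<bar>e1\<bar> \<le> 1" "\<bar>e2\<bar> \<le> 1"
  shows "(\<Sum>(q,b)\<in>Rset Q. (norm (of_real (Gq g Q q) * Cq \<psi> (2*h) q b))^2) \<le> 4 * real h * Gb^2 * (harm Q)^4"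
proof -
  define H :: real where "H = harm Q"
  have H0: "0 \<le> H" unfolding H_def by (rule harm_nonneg)
  define T where "T q b = (Gb * H)^2 * (2 * real h / ((real q)^2 * dn (real b / real q)))" for q b
  have T0: "0 \<le> T q b" if "1 \<le> b" "b < q" for q b
    unfolding T_def using dn_bq_pos[OF that] by simp
  have "(\<Sum>(q,b)\<in>Rset Q. (norm (of_real (Gq g Q q) * Cq \<psi> (2*h) q b))^2) \<le> (\<Sum>(q,b)\<in>Rset Q. T q b)"
  proof (rule sum_mono, clarify)
    fix q b assume qb: "(q,b) \<in> Rset Q"
    hence q: "1 \<le> q" and b: "1 \<le> b" "b < q" by (auto simp: Rset_def)
    have "(norm (of_real (Gq g Q q) * Cq \<psi> (2*h) q b))^2 = (Gq g Q q)^2 * (norm (Cq \<psi> (2*h) q b))^2"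
      by (simp add: norm_mult power_mult_distrib)
    also have "\<dots> \<le> (Gb * H)^2 * (2 * real h / ((real q)^2 * dn (real b / real q)))"
    proof (rule mult_mono)
      have "\<bar>Gq g Q q\<bar> \<le> Gb * H" unfolding H_def by (rule Gq_bound[OF g q Gb])
      hence "\<bar>Gq g Q q\<bar> \<le> \<bar>Gb * H\<bar>" using Gb H0 by simp
      thus "(Gq g Q q)^2 \<le> (Gb * H)^2" by (simp only: abs_le_square_iff)
      show "(norm (Cq \<psi> (2*h) q b))^2 \<le> 2 * real h / ((real q)^2 * dn (real b / real q))"
        by (rule Cq_bound[OF p1 p2 e b]) auto
    qed auto
    finally show "(norm (of_real (Gq g Q q) * Cq \<psi> (2*h) q b))^2 \<le> T q b" unfolding T_def .
  qed
  also have "\<dots> \<le> (\<Sum>(q,b)\<in>Sigma {1..Q} (\<lambda>q. {1..<q}). T q b)"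
    by (rule sum_mono2) (auto simp: Rset_def intro!: T0)
  also have "\<dots> = (\<Sum>q\<in>{1..Q}. \<Sum>b\<in>{1..<q}. T q b)" by (rule sum.Sigma[symmetric]) auto
  also have "\<dots> \<le> (\<Sum>q\<in>{1..Q}. (Gb * H)^2 * (4 * real h * H) * inverse (real q))"
  proof (rule sum_mono)
    fix q assume q: "q \<in> {1..Q}"
    have "(\<Sum>b\<in>{1..<q}. T q b) = (Gb * H)^2 * (2 * real h / (real q)^2) * (\<Sum>b\<in>{1..<q}. 1 / dn (real b / real q))"
      unfolding T_def by (simp add: sum_distrib_left)
    also have "\<dots> \<le> (Gb * H)^2 * (2 * real h / (real q)^2) * (2 * real q * H)"
    proof (rule mult_left_mono)
      have "harm q \<le> (harm Q :: real)" using q by (intro harm_mono) auto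
      hence "2 * real q * harm q \<le> 2 * real q * H" unfolding H_def by (intro mult_left_mono) auto
      moreover have q1: "1 \<le> q" using q by simp
      ultimately show "(\<Sum>b\<in>{1..<q}. 1 / dn (real b / real q)) \<le> 2 * real q * H"
        using sum_inv_dn[OF q1] by linarith
    qed simp
    also have "\<dots> = (Gb * H)^2 * (4 * real h * H) * inverse (real q)"
      using q by (simp add: power2_eq_square field_simps)
    finally show "(\<Sum>b\<in>{1..<q}. T q b) \<le> (Gb * H)^2 * (4 * real h * H) * inverse (real q)" .
  qed
  also have "\<dots> = (Gb * H)^2 * (4 * real h * H) * H"
    unfolding H_def by (simp add: harm_def sum_distrib_left)
  also have "\<dots> = 4 * real h * Gb^2 * (harm Q)^4"
    unfolding H_def by (simp add: power2_eq_square power4_eq_xxxx)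
  finally show ?thesis .
qed

lemma discrete_bound:
  fixes g \<psi> :: "nat \<Rightarrow> real"
  assumes g: "\<And>d. 1 \<le> d \<Longrightarrow> d \<le> Q \<Longrightarrow> \<bar>g d\<bar> \<le> Gb" and Gb: "0 \<le> Gb" and Q: "1 \<le> Q"
    and p1: "\<And>i. i < h \<Longrightarrow> \<psi> i = e1" and p2: "\<And>i. h \<le> i \<Longrightarrow> i < 2*h \<Longrightarrow> \<psi> i = e2"
    and e: "\<bar>e1\<bar> \<le> 1" "\<bar>e2\<bar> \<le> 1"
  shows "(\<Sum>m\<in>{M0..<M0+N}. ((\<Sum>d\<in>{1..Q}. g d * ((\<Sum>i<2*h. \<psi> i * of_bool (d dvd m+i)) - (\<Sum>i<2*h. \<psi> i)/real d)))^2)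
        \<le> (real N + harm (nat \<lfloor>(real Q)^2/2\<rfloor>) * (real Q)^2) * (4 * real h * Gb^2 * (harm Q)^4)"
proof -
  define A where "A r = of_real (Gq g Q (fst r)) * Cq \<psi> (2*h) (fst r) (snd r)" for r
  define \<alpha> where "\<alpha> r = real (snd r) / real (fst r)" for r
  define \<delta> :: real where "\<delta> = 1 / (real Q)^2"
  have d: "\<delta> > 0" unfolding \<delta>_def using Q by simp
  have sp: "\<delta> \<le> dn (\<alpha> r - \<alpha> s)" if "r \<in> Rset Q" "s \<in> Rset Q" "r \<noteq> s" for r s
    using Rset_spacing[of "fst r" "snd r" Q "fst s" "snd s"] that unfolding \<delta>_def \<alpha>_def by auto
  have "(\<Sum>m\<in>{M0..<M0+N}. ((\<Sum>d\<in>{1..Q}. g d * ((\<Sum>i<2*h. \<psi> i * of_bool (d dvd m+i)) - (\<Sum>i<2*h. \<psi> i)/real d)))^2)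
     = (\<Sum>m\<in>{M0..<M0+N}. (norm (\<Sum>r\<in>Rset Q. A r * ee (real m * \<alpha> r)))^2)"
  proof (rule sum.cong[OF refl])
    fix m
    have eqc: "complex_of_real (\<Sum>d\<in>{1..Q}. g d * ((\<Sum>i<2*h. \<psi> i * of_bool (d dvd m+i)) - (\<Sum>i<2*h. \<psi> i)/real d))
       = (\<Sum>r\<in>Rset Q. A r * ee (real m * \<alpha> r))"
      unfolding expansion A_def \<alpha>_def by (simp add: split_beta)
    have "norm (\<Sum>r\<in>Rset Q. A r * ee (real m * \<alpha> r))
        = \<bar>\<Sum>d\<in>{1..Q}. g d * ((\<Sum>i<2*h. \<psi> i * of_bool (d dvd m+i)) - (\<Sum>i<2*h. \<psi> i)/real d)\<bar>"
      using arg_cong[OF eqc, of norm] by (simp only: norm_of_real)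
    thus "((\<Sum>d\<in>{1..Q}. g d * ((\<Sum>i<2*h. \<psi> i * of_bool (d dvd m+i)) - (\<Sum>i<2*h. \<psi> i)/real d)))^2
        = (norm (\<Sum>r\<in>Rset Q. A r * ee (real m * \<alpha> r)))^2" by simp
  qed
  also have "\<dots> \<le> (real N + harm (nat \<lfloor>1/(2*\<delta>)\<rfloor>) / \<delta>) * (\<Sum>r\<in>Rset Q. (norm (A r))^2)"
    by (rule large_sieve[OF finite_Rset d sp])
  also have "\<dots> \<le> (real N + harm (nat \<lfloor>(real Q)^2/2\<rfloor>) * (real Q)^2) * (4 * real h * Gb^2 * (harm Q)^4)"
  proof (rule mult_mono)
    show "real N + harm (nat \<lfloor>1/(2*\<delta>)\<rfloor>) / \<delta> \<le> real N + harm (nat \<lfloor>(real Q)^2/2\<rfloor>) * (real Q)^2"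
      unfolding \<delta>_def by simp
    have "(\<Sum>r\<in>Rset Q. (norm (A r))^2) = (\<Sum>(q,b)\<in>Rset Q. (norm (of_real (Gq g Q q) * Cq \<psi> (2*h) q b))^2)"
      unfolding A_def by (simp add: split_beta)
    also have "\<dots> \<le> 4 * real h * Gb^2 * (harm Q)^4" by (rule A_bound[OF g Gb p1 p2 e])
    finally show "(\<Sum>r\<in>Rset Q. (norm (A r))^2) \<le> 4 * real h * Gb^2 * (harm Q)^4" .
    show "0 \<le> (\<Sum>r\<in>Rset Q. (norm (A r))^2)" by (intro sum_nonneg) simp
    show "0 \<le> real N + harm (nat \<lfloor>(real Q)^2/2\<rfloor>) * (real Q)^2"
      by (intro add_nonneg_nonneg mult_nonneg_nonneg harm_nonneg) simp_all
  qed
  finally show ?thesis .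
qed

definition pf :: "nat \<Rightarrow> nat set" where "pf n = {p. prime p \<and> p dvd n}"

lemma pf_finite: "n > 0 \<Longrightarrow> finite (pf n)"
  by (rule finite_subset[of _ "{..n}"]) (auto simp: pf_def dvd_imp_le)

lemma pf_empty_iff: "n > 0 \<Longrightarrow> pf n = {} \<longleftrightarrow> n = 1"
  using prime_factor_nat[of n] by (auto simp: pf_def)

lemma prod_primes_dvd:
  assumes "finite S" "\<And>p. p \<in> S \<Longrightarrow> prime (p::nat)"
  shows "(\<Prod>S) dvd m \<longleftrightarrow> (\<forall>p\<in>S. p dvd m)"
  using assms
proof (induction S rule: finite_induct)
  case empty thus ?case by simp
next
  case (insert p S)
  have cop: "coprime p (\<Prod>S)"
  proof (rule prod_coprime_right)
    fix q assume q: "q \<in> S"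
    have "prime p" "prime q" "p \<noteq> q" using insert q by auto
    thus "coprime p q" by (simp add: primes_coprime)
  qed
  have "(\<Prod>(insert p S)) = p * \<Prod>S" using insert by simp
  hence "(\<Prod>(insert p S)) dvd m \<longleftrightarrow> p dvd m \<and> (\<Prod>S) dvd m"
    using cop by (auto intro: divides_mult dest: dvd_mult_left dvd_mult_right)
  thus ?case using insert by simp
qed

lemma pow_alt_sum:
  assumes "finite A" "A \<noteq> {}"
  shows "(\<Sum>X\<in>Pow A. (-1::real) ^ card X) = 0"
proof -
  have "(\<Prod>x\<in>A. (1::real) - 1) = (\<Sum>X\<in>Pow A. (-1) ^ card X * (\<Prod>x\<in>X. 1) * (\<Prod>x\<in>A-X. 1))"
    by (rule prod_diff_conv_sum[OF assms(1)])
  moreover have "card A > 0" using assms by (simp add: card_gt_0_iff)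
  ultimately show ?thesis using zero_power[of "card A", where 'a=real] by simp
qed

lemma inversion:
  fixes f g :: "nat \<Rightarrow> real"
  assumes f: "\<And>n. n \<ge> 1 \<Longrightarrow> f n = (\<Sum>d | d dvd n. g d)" and n: "n \<ge> 1"
  shows "g n = (\<Sum>S\<in>Pow (pf n). (-1)^card S * f (n div \<Prod>S))"
proof -
  define P where "P = pf n"
  define D where "D = {d. d dvd n}"
  have finP: "finite P" unfolding P_def using n by (intro pf_finite) simp
  have finD: "finite D" unfolding D_def using n by simp
  have Sprime: "\<And>p. p \<in> S \<Longrightarrow> prime p" if "S \<in> Pow P" for S using that by (auto simp: P_def pf_def)
  have finS: "finite S" if "S \<in> Pow P" for S using that finP by (auto intro: finite_subset)
  have Sdvd: "(\<Prod>S) dvd m \<longleftrightarrow> S \<subseteq> pf m" if "S \<in> Pow P" for S m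
    using prod_primes_dvd[OF finS[OF that] Sprime[OF that]] Sprime[OF that] by (auto simp: pf_def)
  have step1: "f (n div \<Prod>S) = (\<Sum>d\<in>D. if (\<Prod>S) dvd n div d then g d else 0)" if S: "S \<in> Pow P" for S
  proof -
    have pS: "(\<Prod>S) dvd n" using Sdvd[OF S] S by (auto simp: P_def)
    have p0: "(\<Prod>S) \<noteq> 0" using pS n by auto
    have "n = (\<Prod>S) * (n div \<Prod>S)" using pS by simp
    hence k1: "n div \<Prod>S \<ge> 1" using n by (cases "n div \<Prod>S = 0") auto
    have "{d. d dvd n div \<Prod>S} = {d\<in>D. (\<Prod>S) dvd n div d}"
    proof (intro set_eqI iffI)
      fix d assume "d \<in> {d. d dvd n div \<Prod>S}"
      hence dd: "d * \<Prod>S dvd n" using dvd_div_iff_mult[OF p0 pS] by simp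
      hence "d dvd n" by (rule dvd_mult_left)
      moreover have "d \<noteq> 0" using dd n by auto
      ultimately show "d \<in> {d\<in>D. (\<Prod>S) dvd n div d}"
        using dd dvd_div_iff_mult[of d n "\<Prod>S"] by (simp add: D_def mult.commute)
    next
      fix d assume "d \<in> {d\<in>D. (\<Prod>S) dvd n div d}"
      hence dn: "d dvd n" and c: "(\<Prod>S) dvd n div d" by (auto simp: D_def)
      have "d \<noteq> 0" using dn n by auto
      hence "(\<Prod>S) * d dvd n" using c dvd_div_iff_mult[of d n "\<Prod>S"] dn by simp
      thus "d \<in> {d. d dvd n div \<Prod>S}" using dvd_div_iff_mult[OF p0 pS] by (simp add: mult.commute)
    qed
    hence "f (n div \<Prod>S) = (\<Sum>d\<in>{d\<in>D. (\<Prod>S) dvd n div d}. g d)" using f[OF k1] by simp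
    also have "\<dots> = (\<Sum>d\<in>D. if (\<Prod>S) dvd n div d then g d else 0)"
      using finD by (simp add: sum.inter_filter)
    finally show ?thesis .
  qed
  have inner: "(\<Sum>S\<in>Pow P. if (\<Prod>S) dvd n div d then (-1::real)^card S else 0) = (if d = n then 1 else 0)"
    if d: "d \<in> D" for d
  proof -
    have dn: "d dvd n" using d by (simp add: D_def)
    have nd: "n = d * (n div d)" using dn by simp
    hence k0: "n div d > 0" using n by (cases "n div d = 0") auto
    have ndv: "(n div d) dvd n" using dvd_triv_right[of "n div d" d] nd by simp
    have sub: "pf (n div d) \<subseteq> P" unfolding P_def pf_def using ndv
      by (auto intro: dvd_trans)
    have "(\<Sum>S\<in>Pow P. if (\<Prod>S) dvd n div d then (-1::real)^card S else 0)
        = (\<Sum>S\<in>{S\<in>Pow P. (\<Prod>S) dvd n div d}. (-1)^card S)"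
      using finP by (intro sum.inter_filter[symmetric]) simp
    also have "{S\<in>Pow P. (\<Prod>S) dvd n div d} = Pow (pf (n div d))"
      using Sdvd sub by auto
    also have "(\<Sum>S\<in>Pow (pf (n div d)). (-1::real)^card S) = (if d = n then 1 else 0)"
    proof (cases "d = n")
      case True
      hence "pf (n div d) = {}" using n by (simp add: pf_def)
      thus ?thesis using True by simp
    next
      case False
      have "n div d \<noteq> 1"
      proof
        assume "n div d = 1"
        hence "n = d" using nd by simp
        thus False using False by simp
      qed
      hence "pf (n div d) \<noteq> {}" using pf_empty_iff[OF k0] by simp
      thus ?thesis using False pow_alt_sum[OF pf_finite[OF k0]] by simp
    qed
    finally show ?thesis .
  qed
  have "(\<Sum>S\<in>Pow P. (-1)^card S * f (n div \<Prod>S))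
      = (\<Sum>S\<in>Pow P. \<Sum>d\<in>D. g d * (if (\<Prod>S) dvd n div d then (-1::real)^card S else 0))"
  proof (rule sum.cong[OF refl])
    fix S assume S: "S \<in> Pow P"
    show "(-1)^card S * f (n div \<Prod>S) = (\<Sum>d\<in>D. g d * (if (\<Prod>S) dvd n div d then (-1::real)^card S else 0))"
      unfolding step1[OF S] sum_distrib_left by (rule sum.cong[OF refl]) simp
  qed
  also have "\<dots> = (\<Sum>d\<in>D. g d * (\<Sum>S\<in>Pow P. if (\<Prod>S) dvd n div d then (-1::real)^card S else 0))"
    by (subst sum.swap) (simp add: sum_distrib_left)
  also have "\<dots> = (\<Sum>d\<in>D. g d * (if d = n then 1 else 0))"
    by (intro sum.cong refl) (simp add: inner)
  also have "\<dots> = (\<Sum>d\<in>D. if d = n then g d else 0)" by (intro sum.cong refl) simp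
  also have "\<dots> = g n" using finD by (simp add: sum.delta D_def)
  finally show ?thesis unfolding P_def by simp
qed

lemma omega_bound:
  assumes n: "n \<ge> 1" and a: "a > 0"
  shows "real (2 ^ card (pf n)) \<le> 2 ^ (nat \<lceil>2 powr (1/a)\<rceil>) * real n powr a"
proof -
  define T where "T = nat \<lceil>2 powr (1/a)\<rceil>"
  define P where "P = pf n"
  define Ps where "Ps = {p\<in>P. p \<le> T}"
  define Pl where "Pl = {p\<in>P. T < p}"
  have finP: "finite P" unfolding P_def using n by (intro pf_finite) simp
  have Pprime: "prime p" if "p \<in> P" for p using that by (simp add: P_def pf_def)
  have un: "P = Ps \<union> Pl" "Ps \<inter> Pl = {}" unfolding Ps_def Pl_def by auto
  have finPs: "finite Ps" "finite Pl" using finP unfolding Ps_def Pl_def by auto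
  have cardP: "card P = card Ps + card Pl" using un finPs by (simp add: card_Un_disjoint)
  have "Ps \<subseteq> {1..T}"
  proof
    fix p assume p: "p \<in> Ps"
    hence "p \<in> P" "p \<le> T" by (auto simp: Ps_def)
    moreover from \<open>p \<in> P\<close> have "prime p" by (rule Pprime)
    hence "p > 0" by (rule prime_gt_0_nat)
    ultimately show "p \<in> {1..T}" by simp
  qed
  hence cPs: "card Ps \<le> T" using card_mono[of "{1..T}" Ps] by simp
  have large: "2 \<le> real p powr a" if "p \<in> Pl" for p
  proof -
    have "2 powr (1/a) \<le> real T" unfolding T_def by linarith
    also have "real T < real p" using that by (simp add: Pl_def)
    finally have lt: "2 powr (1/a) < real p" .
    have "2 = (2 powr (1/a)) powr a" using a by (simp add: powr_powr)
    also have "\<dots> \<le> real p powr a" using lt a by (intro powr_mono2) auto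
    finally show ?thesis .
  qed
  have ge1: "1 \<le> real p powr a" if "p \<in> P" for p
  proof (rule ge_one_powr_ge_zero)
    have "p > 0" using Pprime[OF that] by (rule prime_gt_0_nat)
    thus "1 \<le> real p" by simp
  qed (use a in simp)
  have "real (2 ^ card P) = 2 ^ card Ps * 2 ^ card Pl" by (simp add: cardP power_add)
  also have "\<dots> \<le> 2 ^ T * (\<Prod>p\<in>Pl. real p powr a)"
  proof (rule mult_mono)
    show "(2::real) ^ card Ps \<le> 2 ^ T" using cPs by (intro power_increasing) auto
    have "(2::real) ^ card Pl = (\<Prod>p\<in>Pl. 2)" by simp
    also have "\<dots> \<le> (\<Prod>p\<in>Pl. real p powr a)" by (intro prod_mono) (auto intro: large)
    finally show "(2::real) ^ card Pl \<le> (\<Prod>p\<in>Pl. real p powr a)" .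
  qed (auto intro: prod_nonneg)
  also have "(\<Prod>p\<in>Pl. real p powr a) \<le> (\<Prod>p\<in>P. real p powr a)"
  proof -
    have "(\<Prod>p\<in>P. real p powr a) = (\<Prod>p\<in>Pl. real p powr a) * (\<Prod>p\<in>Ps. real p powr a)"
      using un finPs by (simp add: prod.union_disjoint mult.commute)
    moreover have "1 \<le> (\<Prod>p\<in>Ps. real p powr a)" using ge1 by (intro prod_ge_1) (auto simp: Ps_def)
    moreover have "0 \<le> (\<Prod>p\<in>Pl. real p powr a)" by (intro prod_nonneg) simp
    ultimately show ?thesis by (simp add: mult_le_cancel_left1)
  qed
  also have "(\<Prod>p\<in>P. real p powr a) = real (\<Prod>P) powr a"
    by (simp add: prod_powr_distrib)
  also have "\<dots> \<le> real n powr a"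
  proof -
    have "(\<Prod>P) dvd n" using prod_primes_dvd[OF finP Pprime] by (auto simp: P_def pf_def)
    hence "\<Prod>P \<le> n" using n by (intro dvd_imp_le) auto
    hence le: "real (\<Prod>P) \<le> real n" by (simp only: of_nat_le_iff)
    show ?thesis by (rule powr_mono2[OF _ _ le]) (use a in \<open>auto intro: prod_nonneg\<close>)
  qed
  finally show ?thesis unfolding T_def P_def by (simp add: mult_left_mono)
qed

lemma g_bound:
  fixes f g :: "nat \<Rightarrow> real"
  assumes f: "\<And>n. n \<ge> 1 \<Longrightarrow> f n = (\<Sum>d | d dvd n. g d)" and a: "a > 0"
    and fb: "\<And>n. n \<ge> 1 \<Longrightarrow> \<bar>f n\<bar> \<le> C * real n powr a" and n: "n \<ge> 1"
  shows "\<bar>g n\<bar> \<le> 2 ^ (nat \<lceil>2 powr (1/a)\<rceil>) * C * real n powr (2*a)"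
proof -
  have C0: "0 \<le> C" using fb[of 1] by simp
  have finP: "finite (pf n)" using n by (intro pf_finite) simp
  have "\<bar>g n\<bar> = \<bar>\<Sum>S\<in>Pow (pf n). (-1)^card S * f (n div \<Prod>S)\<bar>"
    by (rule arg_cong[where f=abs, OF inversion[OF f n]])
  also have "\<dots> \<le> (\<Sum>S\<in>Pow (pf n). \<bar>(-1)^card S * f (n div \<Prod>S)\<bar>)"
    by (rule sum_abs)
  also have "\<dots> \<le> (\<Sum>S\<in>Pow (pf n). C * real n powr a)"
  proof (rule sum_mono)
    fix S assume S: "S \<in> Pow (pf n)"
    have finS: "finite S" by (rule finite_subset[OF _ finP]) (use S in simp)
    have Sp: "\<And>p. p \<in> S \<Longrightarrow> prime p" using S by (auto simp: pf_def)
    have "\<forall>p\<in>S. p dvd n" using S by (auto simp: pf_def)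
    hence pS: "(\<Prod>S) dvd n" using prod_primes_dvd[OF finS Sp] by simp
    have le: "(\<Prod>S) \<le> n" by (rule dvd_imp_le[OF pS]) (use n in simp)
    have p0: "(\<Prod>S) > 0" using pS n by (cases "\<Prod>S = 0") auto
    have k1: "n div \<Prod>S \<ge> 1" using le p0 by (simp add: div_greater_zero_iff Suc_le_eq)
    have kn: "n div \<Prod>S \<le> n" by (rule div_le_dividend)
    have "\<bar>(-1)^card S * f (n div \<Prod>S)\<bar> = \<bar>f (n div \<Prod>S)\<bar>" by (simp add: abs_mult)
    also have "\<dots> \<le> C * real (n div \<Prod>S) powr a" by (rule fb[OF k1])
    also have "\<dots> \<le> C * real n powr a" using kn a C0 by (intro mult_left_mono powr_mono2) auto
    finally show "\<bar>(-1)^card S * f (n div \<Prod>S)\<bar> \<le> C * real n powr a" .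
  qed
  also have "\<dots> = real (2 ^ card (pf n)) * (C * real n powr a)" using finP by (simp add: card_Pow)
  also have "\<dots> \<le> (2 ^ (nat \<lceil>2 powr (1/a)\<rceil>) * real n powr a) * (C * real n powr a)"
    by (rule mult_right_mono[OF omega_bound[OF n a]]) (use C0 in simp)
  also have "\<dots> = 2 ^ (nat \<lceil>2 powr (1/a)\<rceil>) * C * real n powr (2*a)"
  proof -
    have e: "real n powr (2*a) = real n powr a * real n powr a"
      using powr_add[of "real n" a a] by (simp only: mult_2)
    show ?thesis unfolding e by (simp add: ac_simps)
  qed
  finally show ?thesis .
qed

lemma integral_steps:
  fixes F :: "real \<Rightarrow> real" and V :: "nat \<Rightarrow> real"
  assumes FV: "\<And>k x. N \<le> k \<Longrightarrow> k < 2*N \<Longrightarrow> real k < x \<Longrightarrow> x < real k + 1 \<Longrightarrow> F x = V k"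
  shows "integral {real N..2 * real N} F = (\<Sum>k\<in>{N..<2*N}. V k)"
proof -
  have "j \<le> N \<Longrightarrow> (F has_integral (\<Sum>k\<in>{N..<N+j}. V k)) {real N..real N + real j}" for j
  proof (induction j)
    case 0
    have "{real N..real N + real 0} = {real N}" by simp
    thus ?case using has_integral_refl(2)[of F "real N"] by simp
  next
    case (Suc j)
    hence IH: "(F has_integral (\<Sum>k\<in>{N..<N+j}. V k)) {real N..real N + real j}" by simp
    have piece: "(F has_integral V (N+j)) {real N + real j..real N + real (Suc j)}"
    proof (rule has_integral_spike[of "{real N + real j, real N + real (Suc j)}"])
      show "negligible {real N + real j, real N + real (Suc j)}" by (rule negligible_finite) simp
      fix x assume x: "x \<in> {real N + real j..real N + real (Suc j)} - {real N + real j, real N + real (Suc j)}"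
      show "F x = V (N+j)" using x Suc.prems by (intro FV) auto
    next
      show "((\<lambda>x. V (N+j)) has_integral V (N+j)) {real N + real j..real N + real (Suc j)}"
        using has_integral_const_real[of "V (N+j)" "real N + real j" "real N + real (Suc j)"] by simp
    qed
    have "(F has_integral (\<Sum>k\<in>{N..<N+j}. V k) + V (N+j)) {real N..real N + real (Suc j)}"
      by (rule has_integral_combine[OF _ _ IH piece]) auto
    thus ?case by simp
  qed
  from this[of N] have "(F has_integral (\<Sum>k\<in>{N..<N+N}. V k)) {real N..real N + real N}" by simp
  moreover have "real N + real N = 2 * real N" "N + N = 2 * N" by simp_all
  ultimately show ?thesis by (simp add: integral_unique)
qed

lemma window_set:
  fixes x :: real
  assumes x: "real k < x" "x < real k + 1" and hk: "h \<le> k"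
  shows "{n::nat. 1 \<le> n \<and> 0 < \<bar>real n - x\<bar> \<and> \<bar>real n - x\<bar> \<le> real h} = {k+1-h..k+h}"
    and "{n::nat. 1 \<le> n \<and> \<bar>real n - x\<bar> \<le> real h} = {k+1-h..k+h}"
proof -
  have key: "(\<bar>real n - x\<bar> \<le> real h) \<longleftrightarrow> n \<in> {k+1-h..k+h}" for n
  proof
    assume a: "\<bar>real n - x\<bar> \<le> real h"
    hence "real n < real k + 1 + real h" "real k < real n + real h" using x by linarith+
    hence "n < k + 1 + h" "k < n + h" by linarith+
    thus "n \<in> {k+1-h..k+h}" by auto
  next
    assume "n \<in> {k+1-h..k+h}"
    hence "k + 1 \<le> n + h" "n \<le> k + h" using hk by auto
    hence "real k + 1 \<le> real n + real h" "real n \<le> real k + real h" by linarith+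
    thus "\<bar>real n - x\<bar> \<le> real h" using x by linarith
  qed
  have ne: "0 < \<bar>real n - x\<bar>" for n :: nat
  proof -
    have "real n \<noteq> x"
    proof
      assume "real n = x"
      hence "k < n" "n < k + 1" using x by linarith+
      thus False by simp
    qed
    thus ?thesis by simp
  qed
  have pos: "n \<in> {k+1-h..k+h} \<Longrightarrow> 1 \<le> n" for n using hk by auto
  show "{n::nat. 1 \<le> n \<and> 0 < \<bar>real n - x\<bar> \<and> \<bar>real n - x\<bar> \<le> real h} = {k+1-h..k+h}"
    using key ne pos by blast
  show "{n::nat. 1 \<le> n \<and> \<bar>real n - x\<bar> \<le> real h} = {k+1-h..k+h}"
    using key pos by blast
qed

lemma sgn_window:
  fixes x :: real
  assumes x: "real k < x" "x < real k + 1"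
  shows "sgn (real n - x) = (if n \<le> k then -1 else 1)"
proof (cases "n \<le> k")
  case True
  hence "real n \<le> real k" by simp
  thus ?thesis using True x by simp
next
  case False
  hence "real k + 1 \<le> real n" by simp
  thus ?thesis using False x by simp
qed

lemma window_reindex:
  fixes k h :: nat
  assumes "h \<le> k"
  shows "(\<Sum>n\<in>{k+1-h..k+h}. F n) = (\<Sum>i<2*h. F (k + 1 - h + i))"
proof (rule sum.reindex_bij_witness[of _ "\<lambda>i. k + 1 - h + i" "\<lambda>n. n - (k + 1 - h)"])
qed (use assms in auto)

lemma f_as_g:
  fixes f g :: "nat \<Rightarrow> real"
  assumes fg: "\<forall>n\<ge>1. f n = (\<Sum>d | d dvd n. g d)" and gz: "\<forall>q>Q. g q = 0" and n: "n \<ge> 1"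
  shows "f n = (\<Sum>d\<in>{1..Q}. g d * of_bool (d dvd n))"
proof -
  have fin: "finite {d. d dvd n}" using n by simp
  have "f n = (\<Sum>d | d dvd n. g d)" using fg n by simp
  also have "\<dots> = (\<Sum>d\<in>{d. d dvd n} \<inter> {1..Q}. g d)"
  proof (rule sum.mono_neutral_right[OF fin])
    show "{d. d dvd n} \<inter> {1..Q} \<subseteq> {d. d dvd n}" by auto
    show "\<forall>i\<in>{d. d dvd n} - {d. d dvd n} \<inter> {1..Q}. g i = 0"
    proof
      fix i assume i: "i \<in> {d. d dvd n} - {d. d dvd n} \<inter> {1..Q}"
      hence "i dvd n" "\<not> (1 \<le> i \<and> i \<le> Q)" by auto
      moreover have "i \<noteq> 0" using \<open>i dvd n\<close> n by auto
      ultimately have "Q < i" by auto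
      thus "g i = 0" using gz by simp
    qed
  qed
  also have "\<dots> = (\<Sum>d\<in>{1..Q}. if d dvd n then g d else 0)"
    by (subst sum.inter_filter[symmetric]) (auto intro!: sum.cong)
  also have "\<dots> = (\<Sum>d\<in>{1..Q}. g d * of_bool (d dvd n))" by (intro sum.cong) auto
  finally show ?thesis .
qed

lemma value_sum:
  fixes f g \<psi> :: "nat \<Rightarrow> real"
  assumes fg: "\<forall>n\<ge>1. f n = (\<Sum>d | d dvd n. g d)" and gz: "\<forall>q>Q. g q = 0" and m: "m \<ge> 1"
  shows "(\<Sum>i<L. \<psi> i * f (m+i)) = (\<Sum>d\<in>{1..Q}. g d * (\<Sum>i<L. \<psi> i * of_bool (d dvd m+i)))"
proof -
  have "(\<Sum>i<L. \<psi> i * f (m+i)) = (\<Sum>i<L. \<psi> i * (\<Sum>d\<in>{1..Q}. g d * of_bool (d dvd m+i)))"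
    using m by (intro sum.cong refl) (simp add: f_as_g[OF fg gz])
  also have "\<dots> = (\<Sum>i<L. \<Sum>d\<in>{1..Q}. \<psi> i * (g d * of_bool (d dvd m+i)))"
    by (simp only: sum_distrib_left)
  also have "\<dots> = (\<Sum>d\<in>{1..Q}. \<Sum>i<L. \<psi> i * (g d * of_bool (d dvd m+i)))"
    by (rule sum.swap)
  also have "\<dots> = (\<Sum>d\<in>{1..Q}. g d * (\<Sum>i<L. \<psi> i * of_bool (d dvd m+i)))"
    by (simp only: sum_distrib_left mult.left_commute)
  finally show ?thesis .
qed

lemma Mf_Q:
  assumes gz: "\<forall>q>Q. g q = 0" and Q: "Q \<le> 2*N+h"
  shows "Mf g N h = (\<Sum>d\<in>{1..Q}. g d * ((\<Sum>i<2*h. (1::real)) / real d))"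
proof -
  have "(\<Sum>d\<in>{1..2*N+h}. g d / real d) = (\<Sum>d\<in>{1..Q}. g d / real d)"
    by (rule sum.mono_neutral_right) (use gz Q in auto)
  thus ?thesis unfolding Mf_def by (simp add: sum_distrib_left mult_ac)
qed

lemma shift_sum:
  fixes W :: "nat \<Rightarrow> real"
  assumes "h \<le> N"
  shows "(\<Sum>k\<in>{N..<2*N}. W (k+1-h)) = (\<Sum>m\<in>{N+1-h..<(N+1-h)+N}. W m)"
  by (rule sum.reindex_bij_witness[of _ "\<lambda>m. m + h - 1" "\<lambda>k. k + 1 - h"]) (use assms in auto)

lemma J_discrete:
  fixes f g :: "nat \<Rightarrow> real"
  assumes fg: "\<forall>n\<ge>1. f n = (\<Sum>d | d dvd n. g d)" and gz: "\<forall>q>Q. g q = 0"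
    and hN: "h \<le> N" and QN: "Q \<le> 2*N+h" and Q1: "1 \<le> Q"
    and gb: "\<And>d. 1 \<le> d \<Longrightarrow> d \<le> Q \<Longrightarrow> \<bar>g d\<bar> \<le> Gb" and Gb: "0 \<le> Gb"
  shows "selberg_J f g N h \<le> (real N + harm (nat \<lfloor>(real Q)^2/2\<rfloor>) * (real Q)^2) * (4 * real h * Gb^2 * (harm Q)^4)"
proof -
  define \<psi> :: "nat \<Rightarrow> real" where "\<psi> i = 1" for i
  define W where "W m = (\<Sum>d\<in>{1..Q}. g d * ((\<Sum>i<2*h. \<psi> i * of_bool (d dvd m+i)) - (\<Sum>i<2*h. \<psi> i)/real d))^2" for m
  have "selberg_J f g N h = (\<Sum>k\<in>{N..<2*N}. W (k+1-h))"
    unfolding selberg_J_def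
  proof (rule integral_steps)
    fix k x assume k: "N \<le> k" "k < 2*N" and x: "real k < x" "x < real k + 1"
    have hk: "h \<le> k" using hN k by simp
    have m1: "k + 1 - h \<ge> 1" using hk by simp
    have "(\<Sum>n\<in>{n. 1 \<le> n \<and> 0 < \<bar>real n - x\<bar> \<and> \<bar>real n - x\<bar> \<le> real h}. f n)
        = (\<Sum>i<2*h. \<psi> i * f (k+1-h+i))"
      unfolding window_set(1)[OF x hk] window_reindex[OF hk] \<psi>_def by simp
    also have "\<dots> = (\<Sum>d\<in>{1..Q}. g d * (\<Sum>i<2*h. \<psi> i * of_bool (d dvd (k+1-h)+i)))"
      by (rule value_sum[OF fg gz m1])
    finally have e1: "(\<Sum>n\<in>{n. 1 \<le> n \<and> 0 < \<bar>real n - x\<bar> \<and> \<bar>real n - x\<bar> \<le> real h}. f n)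
        = (\<Sum>d\<in>{1..Q}. g d * (\<Sum>i<2*h. \<psi> i * of_bool (d dvd (k+1-h)+i)))" .
    have e2: "Mf g N h = (\<Sum>d\<in>{1..Q}. g d * ((\<Sum>i<2*h. \<psi> i) / real d))"
      using Mf_Q[OF gz QN] unfolding \<psi>_def .
    show "\<bar>(\<Sum>n\<in>{n. 1 \<le> n \<and> 0 < \<bar>real n - x\<bar> \<and> \<bar>real n - x\<bar> \<le> real h}. f n) - Mf g N h\<bar>^2 = W (k+1-h)"
      unfolding e1 e2 W_def by (simp add: sum_subtractf[symmetric] right_diff_distrib)
  qed
  also have "\<dots> = (\<Sum>m\<in>{N+1-h..<(N+1-h)+N}. W m)" by (rule shift_sum[OF hN])
  also have "\<dots> \<le> (real N + harm (nat \<lfloor>(real Q)^2/2\<rfloor>) * (real Q)^2) * (4 * real h * Gb^2 * (harm Q)^4)"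
    unfolding W_def by (rule discrete_bound[OF gb Gb Q1, where h=h and \<psi>=\<psi> and ?e1.0=1 and ?e2.0=1]) (auto simp: \<psi>_def)
  finally show ?thesis .
qed

lemma I_discrete:
  fixes f g :: "nat \<Rightarrow> real"
  assumes fg: "\<forall>n\<ge>1. f n = (\<Sum>d | d dvd n. g d)" and gz: "\<forall>q>Q. g q = 0"
    and hN: "h \<le> N" and Q1: "1 \<le> Q"
    and gb: "\<And>d. 1 \<le> d \<Longrightarrow> d \<le> Q \<Longrightarrow> \<bar>g d\<bar> \<le> Gb" and Gb: "0 \<le> Gb"
  shows "symmetry_I f N h \<le> (real N + harm (nat \<lfloor>(real Q)^2/2\<rfloor>) * (real Q)^2) * (4 * real h * Gb^2 * (harm Q)^4)"
proof -
  define \<psi> :: "nat \<Rightarrow> real" where "\<psi> i = (if i < h then -1 else 1)" for i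
  have psum: "(\<Sum>i<2*h. \<psi> i) = 0"
  proof -
    have split: "{..<2*h} = {..<h} \<union> {h..<2*h}" by auto
    have "(\<Sum>i<2*h. \<psi> i) = (\<Sum>i<h. \<psi> i) + (\<Sum>i\<in>{h..<2*h}. \<psi> i)"
      unfolding split by (rule sum.union_disjoint) auto
    also have "\<dots> = 0" by (simp add: \<psi>_def)
    finally show ?thesis .
  qed
  define W where "W m = (\<Sum>d\<in>{1..Q}. g d * ((\<Sum>i<2*h. \<psi> i * of_bool (d dvd m+i)) - (\<Sum>i<2*h. \<psi> i)/real d))^2" for m
  have "symmetry_I f N h = (\<Sum>k\<in>{N..<2*N}. W (k+1-h))"
    unfolding symmetry_I_def
  proof (rule integral_steps)
    fix k x assume k: "N \<le> k" "k < 2*N" and x: "real k < x" "x < real k + 1"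
    have hk: "h \<le> k" using hN k by simp
    have m1: "k + 1 - h \<ge> 1" using hk by simp
    have sg: "sgn (real (k+1-h+i) - x) = \<psi> i" if "i < 2*h" for i
      unfolding sgn_window[OF x] \<psi>_def using hk by auto
    have "(\<Sum>n\<in>{n. 1 \<le> n \<and> \<bar>real n - x\<bar> \<le> real h}. sgn (real n - x) * f n)
        = (\<Sum>i<2*h. \<psi> i * f (k+1-h+i))"
      unfolding window_set(2)[OF x hk] window_reindex[OF hk]
    proof (rule sum.cong[OF refl])
      fix i assume "i \<in> {..<2*h}"
      hence "sgn (real (k+1-h+i) - x) = \<psi> i" by (intro sg) simp
      thus "sgn (real (k+1-h+i) - x) * f (k+1-h+i) = \<psi> i * f (k+1-h+i)" by (simp only:)
    qed
    also have "\<dots> = (\<Sum>d\<in>{1..Q}. g d * (\<Sum>i<2*h. \<psi> i * of_bool (d dvd (k+1-h)+i)))"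
      by (rule value_sum[OF fg gz m1])
    finally have e1: "(\<Sum>n\<in>{n. 1 \<le> n \<and> \<bar>real n - x\<bar> \<le> real h}. sgn (real n - x) * f n)
        = (\<Sum>d\<in>{1..Q}. g d * (\<Sum>i<2*h. \<psi> i * of_bool (d dvd (k+1-h)+i)))" .
    show "\<bar>\<Sum>n\<in>{n. 1 \<le> n \<and> \<bar>real n - x\<bar> \<le> real h}. sgn (real n - x) * f n\<bar>^2 = W (k+1-h)"
      unfolding e1 W_def psum by simp
  qed
  also have "\<dots> = (\<Sum>m\<in>{N+1-h..<(N+1-h)+N}. W m)" by (rule shift_sum[OF hN])
  also have "\<dots> \<le> (real N + harm (nat \<lfloor>(real Q)^2/2\<rfloor>) * (real Q)^2) * (4 * real h * Gb^2 * (harm Q)^4)"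
    unfolding W_def by (rule discrete_bound[OF gb Gb Q1, where h=h and \<psi>=\<psi> and ?e1.0="-1" and ?e2.0=1]) (auto simp: \<psi>_def)
  finally show ?thesis .
qed

lemma final_arith:
  fixes X q h c c1 a lam \<theta> e0 H H2 ca B Gb :: real
  assumes X1: "1 \<le> X" and q1: "1 \<le> q" and qX: "q \<le> c * X powr lam" and c: "0 < c"
    and lam: "0 \<le> lam" "lam \<le> 1"
    and hX: "c1 * X powr \<theta> \<le> h" and c1: "0 < c1" and a: "0 < a"
    and H2: "0 \<le> H2" "H2 \<le> ca * q powr (2*a)" and H: "0 \<le> H" "H \<le> ca * q powr a" and ca: "0 \<le> ca"
    and Gb: "Gb = B * q powr (2*a)" and B: "0 \<le> B"
    and e1: "8*a - \<theta> \<le> -e0" and e2: "2*lam + 10*a - \<theta> \<le> 1 - e0"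
  shows "(X + H2 * q^2) * (4*h*Gb^2*H^4)
     \<le> (4 * B^2 * ca^4 * (c powr (8*a) + ca * c powr (2 + 10*a)) / c1) * X * h^2 * X powr (-e0)"
proof -
  have X0: "0 < X" using X1 by simp
  have q0: "0 < q" using q1 by simp
  have h0: "0 < h" using hX c1 X0 by (smt (verit) mult_pos_pos powr_gt_zero)
  have q2: "q^2 = q powr 2" using q0 by (simp add: powr_numeral)
  have "(X + H2 * q^2) * (4*h*Gb^2*H^4) \<le> (X + ca * q powr (2*a) * q powr 2) * (4*h*(B * q powr (2*a))^2*(ca * q powr a)^4)"
  proof (rule mult_mono)
    show "X + H2 * q^2 \<le> X + ca * q powr (2*a) * q powr 2"
      using H2 q2 by (simp add: mult_right_mono)
    show "4*h*Gb^2*H^4 \<le> 4*h*(B * q powr (2*a))^2*(ca * q powr a)^4"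
      unfolding Gb using H h0 by (intro mult_left_mono power_mono) auto
  qed (use H2 h0 X0 in auto)
  also have "\<dots> = 4 * h * B^2 * ca^4 * (X * q powr (8*a) + ca * q powr (2 + 10*a))"
  proof -
    have e: "(q powr (2*a))^2 * (q powr a)^4 = q powr (8*a)"
      using q0 by (simp add: powr_realpow[symmetric] powr_powr powr_add[symmetric] power2_eq_square)
    have "q powr (2 + 10*a) = q powr (2*a + 2 + 8*a)" by (rule arg_cong[where f="\<lambda>t. q powr t"]) simp
    also have "\<dots> = q powr (2*a) * q powr 2 * q powr (8*a)" by (simp only: powr_add)
    finally have e': "q powr (2*a) * q powr 2 * q powr (8*a) = q powr (2 + 10*a)" by (rule sym)
    have "(X + ca * q powr (2*a) * q powr 2) * (4*h*(B * q powr (2*a))^2*(ca * q powr a)^4)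
        = 4 * h * B^2 * ca^4 * (X + ca * q powr (2*a) * q powr 2) * ((q powr (2*a))^2 * (q powr a)^4)"
      by (simp add: power_mult_distrib algebra_simps)
    also have "\<dots> = 4 * h * B^2 * ca^4 * (X * q powr (8*a) + ca * (q powr (2*a) * q powr 2 * q powr (8*a)))"
      unfolding e by (simp add: algebra_simps)
    finally show ?thesis unfolding e' .
  qed
  also have "\<dots> \<le> 4 * h * B^2 * ca^4 * (X * (c powr (8*a) * X powr (1 + \<theta> - e0 - 1)) + ca * (c powr (2 + 10*a) * X powr (1 + \<theta> - e0)))"
  proof (rule mult_left_mono[OF add_mono])
    have "q powr (8*a) \<le> (c * X powr lam) powr (8*a)" using qX q0 a by (intro powr_mono2) auto
    also have "\<dots> = c powr (8*a) * X powr (lam * (8*a))" using c X0 by (simp add: powr_mult powr_powr)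
    also have "\<dots> \<le> c powr (8*a) * X powr (1 + \<theta> - e0 - 1)"
    proof (rule mult_left_mono)
      have "lam * (8*a) \<le> 8*a" using lam a by (simp add: mult_le_cancel_right1)
      thus "X powr (lam * (8*a)) \<le> X powr (1 + \<theta> - e0 - 1)" using e1 X1 by (intro powr_mono) auto
    qed simp
    finally show "X * q powr (8*a) \<le> X * (c powr (8*a) * X powr (1 + \<theta> - e0 - 1))" using X0 by simp
    have "q powr (2 + 10*a) \<le> (c * X powr lam) powr (2 + 10*a)" using qX q0 a by (intro powr_mono2) auto
    also have "\<dots> = c powr (2 + 10*a) * X powr (lam * (2 + 10*a))" using c X0 by (simp add: powr_mult powr_powr)
    also have "\<dots> \<le> c powr (2 + 10*a) * X powr (1 + \<theta> - e0)"
    proof (rule mult_left_mono)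
      have "lam * (2 + 10*a) \<le> 2*lam + 10*a" using lam a by (simp add: algebra_simps mult_le_cancel_right1)
      thus "X powr (lam * (2 + 10*a)) \<le> X powr (1 + \<theta> - e0)" using e2 X1 by (intro powr_mono) auto
    qed simp
    finally show "ca * q powr (2 + 10*a) \<le> ca * (c powr (2 + 10*a) * X powr (1 + \<theta> - e0))"
      using ca by (simp add: mult_left_mono)
  qed (use h0 in simp)
  also have "\<dots> = 4 * B^2 * ca^4 * (c powr (8*a) + ca * c powr (2 + 10*a)) * (h * X powr (1 + \<theta> - e0))"
  proof -
    have "X powr (1 + \<theta> - e0) = X powr (1 + (1 + \<theta> - e0 - 1))"
      by (rule arg_cong[where f="\<lambda>t. X powr t"]) simp
    also have "\<dots> = X powr 1 * X powr (1 + \<theta> - e0 - 1)" by (rule powr_add)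
    also have "\<dots> = X * X powr (1 + \<theta> - e0 - 1)" using X0 by simp
    finally have "X * X powr (1 + \<theta> - e0 - 1) = X powr (1 + \<theta> - e0)" by (rule sym)
    thus ?thesis by (simp add: algebra_simps)
  qed
  also have "\<dots> \<le> 4 * B^2 * ca^4 * (c powr (8*a) + ca * c powr (2 + 10*a)) * (X * h^2 * X powr (-e0) / c1)"
  proof (rule mult_left_mono)
    have "X powr (1 + \<theta> - e0) = X powr (1 + (-e0) + \<theta>)"
      by (rule arg_cong[where f="\<lambda>t. X powr t"]) simp
    also have "\<dots> = X powr 1 * X powr (-e0) * X powr \<theta>" by (simp only: powr_add)
    finally have XP: "X powr (1 + \<theta> - e0) = X * X powr (-e0) * X powr \<theta>" using X0 by simp
    have "h * X powr (1 + \<theta> - e0) = X * X powr (-e0) * (h * X powr \<theta>)"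
      unfolding XP by (simp add: algebra_simps)
    also have "h * X powr \<theta> \<le> h * (h / c1)"
      using hX c1 h0 by (intro mult_left_mono) (auto simp: field_simps)
    hence "X * X powr (-e0) * (h * X powr \<theta>) \<le> X * X powr (-e0) * (h * (h / c1))"
      by (rule mult_left_mono) (use X0 in auto)
    finally show "h * X powr (1 + \<theta> - e0) \<le> X * h^2 * X powr (-e0) / c1"
      by (simp add: power2_eq_square algebra_simps)
  qed (use ca B c in simp)
  also have "\<dots> = (4 * B^2 * ca^4 * (c powr (8*a) + ca * c powr (2 + 10*a)) / c1) * X * h^2 * X powr (-e0)"
    by simp
  finally show ?thesis .
qed

lemma harm_le_powr:
  assumes a: "a > 0" and n: "n \<ge> 1"
  shows "harm n \<le> (1 + 1/a) * real n powr a"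
proof -
  have "harm n - ln (real n) \<le> harm 1 - ln (real (1::nat))"
    using euler_mascheroni_sequence_decreasing[of 1 n] n by simp
  hence h1: "harm n \<le> 1 + ln (real n)" by (simp add: harm_def)
  have n0: "0 < real n" using n by simp
  have "ln (real n powr a) \<le> real n powr a - 1" using n0 by (intro ln_le_minus_one) simp
  hence "a * ln (real n) \<le> real n powr a" using n0 by (simp add: ln_powr)
  hence l: "ln (real n) \<le> real n powr a / a" using a by (simp add: field_simps)
  have ge1: "1 \<le> real n powr a" using n a by (intro ge_one_powr_ge_zero) auto
  have "harm n \<le> 1 + real n powr a / a" using h1 l by linarith
  also have "\<dots> \<le> real n powr a + real n powr a / a" using ge1 by simp
  also have "\<dots> = (1 + 1/a) * real n powr a" by (simp add: field_simps)
  finally show ?thesis .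
qed

lemma absorb:
  fixes c t X :: real
  assumes c: "0 < c" and t: "t < 1" and X: "c powr (1/(1-t)) \<le> X"
  shows "c * X powr t \<le> X"
proof -
  have X0: "0 < X" using X c by (smt (verit) powr_gt_zero)
  have "c = (c powr (1/(1-t))) powr (1-t)" using c t by (simp add: powr_powr)
  also have "\<dots> \<le> X powr (1-t)" using X t c by (intro powr_mono2) auto
  finally have "c * X powr t \<le> X powr (1-t) * X powr t" using X0 by (intro mult_right_mono) auto
  also have "\<dots> = X" using X0 by (simp add: powr_add[symmetric])
  finally show ?thesis .
qed

theorem mainTheorem2:
  fixes \<theta> lam :: real
  assumes "0 < \<theta>" "\<theta> < 1" "0 \<le> lam" "lam < (1 + \<theta>) / 2"
  shows "\<exists>\<epsilon>0>0. \<forall>c1 c2 :: real. \<forall>C :: real \<Rightarrow> real. 0 < c1 \<longrightarrow> 0 < c2 \<longrightarrow>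
    (\<exists>K N0. \<forall>(N::nat) (h::nat) (Q::nat) (f::nat \<Rightarrow> real) (g::nat \<Rightarrow> real).
       N \<ge> N0 \<longrightarrow>
       c1 * real N powr \<theta> \<le> real h \<longrightarrow> real h \<le> c2 * real N powr \<theta> \<longrightarrow>
       c1 * real N powr lam \<le> real Q \<longrightarrow> real Q \<le> c2 * real N powr lam \<longrightarrow>
       ess_bounded_by C f \<longrightarrow>
       (\<forall>n\<ge>1. f n = (\<Sum>d | d dvd n. g d)) \<longrightarrow>
       (\<forall>q>Q. g q = 0) \<longrightarrow>
       selberg_J f g N h \<le> K * real N * (real h)^2 * real N powr (-\<epsilon>0) \<and>
       symmetry_I f N h \<le> K * real N * (real h)^2 * real N powr (-\<epsilon>0))"
proof -
  note th = assms(1,2) and lm = assms(3,4)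
  define \<mu> where "\<mu> = min \<theta> (1 + \<theta> - 2*lam)"
  have \<mu>0: "\<mu> > 0" unfolding \<mu>_def using th lm by simp
  have \<mu>1: "\<mu> \<le> \<theta>" "2*lam \<le> 1 + \<theta> - \<mu>" unfolding \<mu>_def by auto
  define e0 where "e0 = \<mu>/2"
  define a where "a = \<mu>/48"
  have a0: "a > 0" unfolding a_def using \<mu>0 by simp
  have e1: "8*a - \<theta> \<le> -e0" unfolding a_def e0_def using \<mu>1 \<mu>0 by simp
  have e2: "2*lam + 10*a - \<theta> \<le> 1 - e0" unfolding a_def e0_def using \<mu>1 \<mu>0 by simp
  have lam1: "lam \<le> 1" "lam < 1" using th lm by simp_all
  show ?thesis
  proof (rule exI[of _ e0], intro conjI allI impI)
    show "e0 > 0" unfolding e0_def using \<mu>0 by simp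
    fix c1 c2 :: real and C :: "real \<Rightarrow> real"
    assume c1: "0 < c1" and c2: "0 < c2"
    define T where "T = nat \<lceil>2 powr (1/a)\<rceil>"
    define B where "B = 2^T * \<bar>C a\<bar>"
    define ca where "ca = 1 + 1/a"
    define c2' where "c2' = c2 + 1"
    define K where "K = 4 * B^2 * ca^4 * (c2' powr (8*a) + ca * c2' powr (2 + 10*a)) / c1"
    define N0 where "N0 = nat \<lceil>max (c2 powr (1/(1-\<theta>))) (c2' powr (1/(1-lam)))\<rceil> + 1"
    have B0: "0 \<le> B" unfolding B_def by simp
    have ca0: "0 \<le> ca" unfolding ca_def using a0 by simp
    have c2'0: "0 < c2'" unfolding c2'_def using c2 by simp
    show "\<exists>K N0. \<forall>(N::nat) (h::nat) (Q::nat) (f::nat \<Rightarrow> real) (g::nat \<Rightarrow> real).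
       N \<ge> N0 \<longrightarrow>
       c1 * real N powr \<theta> \<le> real h \<longrightarrow> real h \<le> c2 * real N powr \<theta> \<longrightarrow>
       c1 * real N powr lam \<le> real Q \<longrightarrow> real Q \<le> c2 * real N powr lam \<longrightarrow>
       ess_bounded_by C f \<longrightarrow>
       (\<forall>n\<ge>1. f n = (\<Sum>d | d dvd n. g d)) \<longrightarrow>
       (\<forall>q>Q. g q = 0) \<longrightarrow>
       selberg_J f g N h \<le> K * real N * (real h)^2 * real N powr (-e0) \<and>
       symmetry_I f N h \<le> K * real N * (real h)^2 * real N powr (-e0)"
    proof (intro exI[of _ K] exI[of _ N0] allI impI)
      fix N h Q :: nat and f g :: "nat \<Rightarrow> real"
      assume NN0: "N \<ge> N0" and h1: "c1 * real N powr \<theta> \<le> real h" and h2: "real h \<le> c2 * real N powr \<theta>"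
        and Q1: "c1 * real N powr lam \<le> real Q" and Q2: "real Q \<le> c2 * real N powr lam"
        and eb: "ess_bounded_by C f" and fg: "\<forall>n\<ge>1. f n = (\<Sum>d | d dvd n. g d)"
        and gz: "\<forall>q>Q. g q = 0"
      define X where "X = real N"
      have N0ge: "max (c2 powr (1/(1-\<theta>))) (c2' powr (1/(1-lam))) \<le> real N0"
        unfolding N0_def by linarith
      have X1: "1 \<le> X" unfolding X_def using NN0 unfolding N0_def by simp
      have XN0: "real N0 \<le> X" unfolding X_def using NN0 by simp
      have hN: "h \<le> N"
      proof -
        have "c2 * X powr \<theta> \<le> X" using N0ge XN0 by (intro absorb c2 th(2)) auto
        thus ?thesis using h2 unfolding X_def by simp
      qed
      define Qp where "Qp = max Q 1"
      have Qp1: "1 \<le> Qp" unfolding Qp_def by simp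
      have gzp: "\<forall>q>Qp. g q = 0" using gz unfolding Qp_def by simp
      have Xl1: "1 \<le> X powr lam" using X1 lm by (intro ge_one_powr_ge_zero) auto
      have Qpb: "real Qp \<le> c2' * X powr lam"
      proof (cases "Q \<ge> 1")
        case True
        hence "real Qp = real Q" unfolding Qp_def by simp
        also have "\<dots> \<le> c2 * X powr lam" using Q2 unfolding X_def .
        also have "\<dots> \<le> c2' * X powr lam" using Xl1 unfolding c2'_def by (simp add: distrib_right)
        finally show ?thesis .
      next
        case False
        hence "real Qp = 1" unfolding Qp_def by simp
        also have "\<dots> \<le> c2' * X powr lam" unfolding c2'_def using Xl1 c2
          by (smt (verit) mult_le_cancel_right1)
        finally show ?thesis .
      qed
      have QpN: "Qp \<le> 2*N+h"
      proof -
        have "c2' * X powr lam \<le> X" using N0ge XN0 by (intro absorb c2'0 lam1(2)) auto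
        hence "real Qp \<le> real N" using Qpb unfolding X_def by simp
        thus ?thesis by simp
      qed
      have fb: "\<And>n. n \<ge> 1 \<Longrightarrow> \<bar>f n\<bar> \<le> C a * real n powr a"
        using eb a0 unfolding ess_bounded_by_def by blast
      have fg': "\<And>n. n \<ge> 1 \<Longrightarrow> f n = (\<Sum>d | d dvd n. g d)" using fg by blast
      define q where "q = real Qp"
      have q1: "1 \<le> q" unfolding q_def using Qp1 by simp
      define Gb where "Gb = B * q powr (2*a)"
      have Gb0: "0 \<le> Gb" unfolding Gb_def using B0 by simp
      have gb: "\<bar>g d\<bar> \<le> Gb" if d: "1 \<le> d" "d \<le> Qp" for d
      proof -
        have "\<bar>g d\<bar> \<le> 2 ^ (nat \<lceil>2 powr (1/a)\<rceil>) * C a * real d powr (2*a)"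
          by (rule g_bound[OF fg' a0 fb d(1)])
        also have "\<dots> \<le> B * q powr (2*a)"
          unfolding B_def T_def q_def
        proof (rule mult_mono)
          show "2 ^ nat \<lceil>2 powr (1/a)\<rceil> * C a \<le> 2 ^ nat \<lceil>2 powr (1/a)\<rceil> * \<bar>C a\<bar>" by simp
          show "real d powr (2*a) \<le> real Qp powr (2*a)" using d a0 by (intro powr_mono2) auto
        qed auto
        finally show ?thesis unfolding Gb_def .
      qed
      define H2 :: real where "H2 = harm (nat \<lfloor>(real Qp)^2/2\<rfloor>)"
      define H :: real where "H = harm Qp"
      have H2b: "0 \<le> H2" "H2 \<le> ca * q powr (2*a)"
      proof -
        show "0 \<le> H2" unfolding H2_def by (rule harm_nonneg)
        have "nat \<lfloor>(real Qp)^2/2\<rfloor> \<le> Qp^2"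
        proof -
          have "(real Qp)^2/2 \<le> real (Qp^2)" by simp
          hence "\<lfloor>(real Qp)^2/2\<rfloor> \<le> \<lfloor>real (Qp^2)\<rfloor>" by (rule floor_mono)
          hence "\<lfloor>(real Qp)^2/2\<rfloor> \<le> int (Qp^2)" by (simp only: floor_of_nat)
          thus ?thesis by (simp add: nat_le_iff)
        qed
        hence "H2 \<le> harm (Qp^2)" unfolding H2_def by (rule harm_mono)
        also have "\<dots> \<le> ca * real (Qp^2) powr a" unfolding ca_def
          using Qp1 by (intro harm_le_powr a0) simp
        also have "real (Qp^2) powr a = q powr (2*a)"
        proof -
          have "real (Qp^2) = q powr 2" unfolding q_def using Qp1 by (simp add: powr_numeral)
          thus ?thesis by (simp add: powr_powr)
        qed
        finally show "H2 \<le> ca * q powr (2*a)" .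
      qed
      have Hb: "0 \<le> H" "H \<le> ca * q powr a"
      proof -
        show "0 \<le> H" unfolding H_def by (rule harm_nonneg)
        show "H \<le> ca * q powr a" unfolding H_def ca_def q_def by (rule harm_le_powr[OF a0 Qp1])
      qed
      have hX: "c1 * X powr \<theta> \<le> real h" using h1 unfolding X_def .
      have qX: "q \<le> c2' * X powr lam" using Qpb unfolding q_def .
      have fin: "(X + H2 * q^2) * (4 * real h * Gb^2 * H^4) \<le> K * X * (real h)^2 * X powr (-e0)"
        unfolding K_def
        by (rule final_arith[OF X1 q1 qX c2'0 lm(1) lam1(1) hX c1 a0 H2b Hb ca0 Gb_def B0 e1 e2])
      have J: "selberg_J f g N h \<le> (X + H2 * q^2) * (4 * real h * Gb^2 * H^4)"
        unfolding X_def H2_def q_def H_def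
        by (rule J_discrete[OF fg gzp hN QpN Qp1 gb Gb0])
      have I: "symmetry_I f N h \<le> (X + H2 * q^2) * (4 * real h * Gb^2 * H^4)"
        unfolding X_def H2_def q_def H_def
        by (rule I_discrete[OF fg gzp hN Qp1 gb Gb0])
      show "selberg_J f g N h \<le> K * real N * (real h)^2 * real N powr (-e0) \<and>
            symmetry_I f N h \<le> K * real N * (real h)^2 * real N powr (-e0)"
        using J I fin unfolding X_def by linarith
    qed
  qed
qed

end
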